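(* Let $(M,g,f,\mu)$ be an isotropic quasi-Einstein Lorentzian structure of dimension $4$ with $\mu\neq-\frac12$. If $\operatorname{div}W=0$ and $W(X,Y,Z,\nabla f)=0$ for all vector fields $X,Y,Z$, then $\lambda=0$ and $(M,g)$ is a pure radiation metric with parallel rays.
   Context: Let $(M,g)$ be a pseudo-Riemannian manifold with Levi-Civita connection $\nabla$, Ricci tensor $\rho$, scalar curvature $\tau$, Hessian $\operatorname{Hes}_f=\nabla df$. The structure $(M,g,f,\mu)$, with $f$ a smooth function and $\mu$ a real constant, is called quasi-Einstein (qE) if there is a smooth function $\lambda$ with $\operatorname{Hes}_f+\rho-\mu\, df\otimes df=\lambda g$. It is called isotropic if $\nabla f$ is nowhere zero and null: $g(\nabla f,\nabla f)=0$. Curvature convention: $R(X,Y)=\nabla_{[X,Y]}-[\nabla_X,\nabla_Y]$, $R(X,Y,Z,T)=g(R(X,Y)Z,T)$. In dimension 4 the Weyl tensor is $W(X,Y,Z,T)=R(X,Y,Z,T)+\frac{\tau}{6}\{g(X,Z)g(Y,T)-g(X,T)g(Y,Z)\}+\frac12\{\rho(X,T)g(Y,Z)-\rho(X,Z)g(Y,T)+\rho(Y,Z)g(X,T)-\rho(Y,T)g(X,Z)\}$, and $\operatorname{div}W(X,Y,Z)=-\frac12\{(\nabla_X\rho)(Y,Z)-(\nabla_Y\rho)(X,Z)\}+\frac1{12}\{X(\tau)g(Y,Z)-Y(\tau)g(X,Z)\}$. A Lorentzian metric is a pure radiation metric with parallel rays if $\rho=\phi\,\omega\otimes\omega$ for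 some function $\phi$, where $\omega=g(V,\cdot)$ for a null parallel vector field $V$ (or, locally, a null vector field spanning a parallel line field). *)

theory Defs
  imports "HOL-Analysis.Analysis"
begin

text \<open>Local coordinate formalization: a chart domain U (open subset of real^4)
with metric components g x i j. All notions are written in coordinates.\<close>

definition pd :: "4 \<Rightarrow> (real^4 \<Rightarrow> real) \<Rightarrow> real^4 \<Rightarrow> real" where
  "pd i h x = deriv (\<lambda>t. h (x + t *\<^sub>R axis i 1)) 0"

fun diffs :: "4 list \<Rightarrow> (real^4 \<Rightarrow> real) \<Rightarrow> real^4 \<Rightarrow> real" where
  "diffs [] h = h"
| "diffs (i # is) h = pd i (diffs is h)"

definition smooth_on :: "(real^4) set \<Rightarrow> (real^4 \<Rightarrow> real) \<Rightarrow> bool" where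
  "smooth_on U h \<longleftrightarrow> (\<forall>is. diffs is h differentiable_on U)"

type_synonym metric = "real^4 \<Rightarrow> 4 \<Rightarrow> 4 \<Rightarrow> real"

definition bil :: "metric \<Rightarrow> real^4 \<Rightarrow> real^4 \<Rightarrow> real^4 \<Rightarrow> real" where
  "bil g x v w = (\<Sum>i\<in>UNIV. \<Sum>j\<in>UNIV. g x i j * v $ i * w $ j)"

definition ginv :: "metric \<Rightarrow> real^4 \<Rightarrow> 4 \<Rightarrow> 4 \<Rightarrow> real" where
  "ginv g x i j = matrix_inv (\<chi> a b. g x a b) $ i $ j"

definition lorentzian_at :: "metric \<Rightarrow> real^4 \<Rightarrow> bool" where
  "lorentzian_at g x \<longleftrightarrow> (\<forall>i j. g x i j = g x j i) \<and>
     (\<exists>e :: 4 \<Rightarrow> real^4. \<forall>a b. bil g x (e a) (e b) =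
        (if a = b then (if a = 0 then -1 else 1) else 0))"

definition lorentz_metric :: "(real^4) set \<Rightarrow> metric \<Rightarrow> bool" where
  "lorentz_metric U g \<longleftrightarrow> (\<forall>i j. smooth_on U (\<lambda>x. g x i j)) \<and> (\<forall>x\<in>U. lorentzian_at g x)"

text \<open>Christoffel symbols: chr g k i j = Gamma^k_{ij}.\<close>
definition chr :: "metric \<Rightarrow> 4 \<Rightarrow> 4 \<Rightarrow> 4 \<Rightarrow> real^4 \<Rightarrow> real" where
  "chr g k i j x = 1/2 * (\<Sum>l\<in>UNIV. ginv g x k l *
      (pd i (\<lambda>y. g y j l) x + pd j (\<lambda>y. g y i l) x - pd l (\<lambda>y. g y i j) x))"

text \<open>Standard components R^p_{kij} of [nabla_i,nabla_j] d_k.\<close>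
definition rstd :: "metric \<Rightarrow> 4 \<Rightarrow> 4 \<Rightarrow> 4 \<Rightarrow> 4 \<Rightarrow> real^4 \<Rightarrow> real" where
  "rstd g p k i j x = pd i (chr g p j k) x - pd j (chr g p i k) x
     + (\<Sum>m\<in>UNIV. chr g m j k x * chr g p i m x - chr g m i k x * chr g p j m x)"

text \<open>R(d_i,d_j,d_k,d_l) = g(R(d_i,d_j)d_k, d_l) with R(X,Y) = nabla_[X,Y] - [nabla_X,nabla_Y].\<close>
definition riem :: "metric \<Rightarrow> 4 \<Rightarrow> 4 \<Rightarrow> 4 \<Rightarrow> 4 \<Rightarrow> real^4 \<Rightarrow> real" where
  "riem g i j k l x = - (\<Sum>p\<in>UNIV. rstd g p k i j x * g x p l)"

text \<open>Ricci: rho(X,Y) = trace (Z \<mapsto> R(X,Z)Y).\<close>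
definition ric :: "metric \<Rightarrow> 4 \<Rightarrow> 4 \<Rightarrow> real^4 \<Rightarrow> real" where
  "ric g j k x = (\<Sum>i\<in>UNIV. \<Sum>l\<in>UNIV. ginv g x i l * riem g j i k l x)"

definition scal :: "metric \<Rightarrow> real^4 \<Rightarrow> real" where
  "scal g x = (\<Sum>j\<in>UNIV. \<Sum>k\<in>UNIV. ginv g x j k * ric g j k x)"

definition hes :: "metric \<Rightarrow> (real^4 \<Rightarrow> real) \<Rightarrow> 4 \<Rightarrow> 4 \<Rightarrow> real^4 \<Rightarrow> real" where
  "hes g f i j x = pd i (pd j f) x - (\<Sum>k\<in>UNIV. chr g k i j x * pd k f x)"

definition grad :: "metric \<Rightarrow> (real^4 \<Rightarrow> real) \<Rightarrow> real^4 \<Rightarrow> real^4" where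
  "grad g f x = (\<chi> k. \<Sum>j\<in>UNIV. ginv g x k j * pd j f x)"

definition weyl :: "metric \<Rightarrow> 4 \<Rightarrow> 4 \<Rightarrow> 4 \<Rightarrow> 4 \<Rightarrow> real^4 \<Rightarrow> real" where
  "weyl g i j k l x = riem g i j k l x
     + scal g x / 6 * (g x i k * g x j l - g x i l * g x j k)
     + 1/2 * (ric g i l x * g x j k - ric g i k x * g x j l
              + ric g j k x * g x i l - ric g j l x * g x i k)"

definition covric :: "metric \<Rightarrow> 4 \<Rightarrow> 4 \<Rightarrow> 4 \<Rightarrow> real^4 \<Rightarrow> real" where
  "covric g i j k x = pd i (ric g j k) x
     - (\<Sum>m\<in>UNIV. chr g m i j x * ric g m k x + chr g m i k x * ric g j m x)"

definition divW :: "metric \<Rightarrow> 4 \<Rightarrow> 4 \<Rightarrow> 4 \<Rightarrow> real^4 \<Rightarrow> real" where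
  "divW g i j k x = - 1/2 * (covric g i j k x - covric g j i k x)
     + 1/12 * (pd i (scal g) x * g x j k - pd j (scal g) x * g x i k)"

text \<open>Pure radiation with parallel rays (local version): near every point, rho = phi omega (x) omega,
 omega = g(V,.), V a nowhere-zero null vector field spanning a parallel line field
 (nabla_i V = alpha_i V).\<close>
definition pure_radiation_parallel :: "(real^4) set \<Rightarrow> metric \<Rightarrow> bool" where
  "pure_radiation_parallel U g \<longleftrightarrow> (\<forall>p\<in>U. \<exists>N. open N \<and> p \<in> N \<and> N \<subseteq> U \<and>
     (\<exists>(V :: real^4 \<Rightarrow> real^4) (\<phi> :: real^4 \<Rightarrow> real) (\<alpha> :: 4 \<Rightarrow> real^4 \<Rightarrow> real).
        (\<forall>k. smooth_on N (\<lambda>x. V x $ k)) \<and>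
        (\<forall>x\<in>N. V x \<noteq> 0 \<and> bil g x (V x) (V x) = 0 \<and>
           (\<forall>i k. pd i (\<lambda>y. V y $ k) x + (\<Sum>m\<in>UNIV. chr g k i m x * V x $ m) = \<alpha> i x * V x $ k) \<and>
           (\<forall>i j. ric g i j x = \<phi> x * (\<Sum>a\<in>UNIV. g x i a * V x $ a) * (\<Sum>b\<in>UNIV. g x j b * V x $ b)))))"

end

theory Submission
  imports Defs
begin

lemma line_deriv:
  fixes h :: "'a::real_normed_vector \<Rightarrow> real"
  assumes "(h has_derivative D) (at (y + s *\<^sub>R v))"
  shows "((\<lambda>t. h (y + t *\<^sub>R v)) has_real_derivative D v) (at s)"
proof -
  have l: "((\<lambda>t. y + t *\<^sub>R v) has_derivative (\<lambda>t. t *\<^sub>R v)) (at s)"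
    by (auto intro!: derivative_eq_intros)
  have "((\<lambda>t. h (y + t *\<^sub>R v)) has_derivative (\<lambda>t. D (t *\<^sub>R v))) (at s)"
    using diff_chain_at[OF l assms] by (simp add: o_def)
  moreover have "(\<lambda>t. D (t *\<^sub>R v)) = (*) (D v)"
    using has_derivative_linear[OF assms] by (auto simp: linear_scale fun_eq_iff)
  ultimately show ?thesis by (simp add: has_field_derivative_def)
qed

lemma pd_eq:
  assumes "(h has_derivative D) (at x)"
  shows "pd i h x = D (axis i 1)"
proof -
  have "((\<lambda>t. h (x + t *\<^sub>R axis i 1)) has_real_derivative D (axis i 1)) (at 0)"
    using line_deriv[of h D x 0 "axis i 1"] assms by simp
  then show ?thesis unfolding pd_def by (rule DERIV_imp_deriv)
qed

lemma pd_cong: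
  assumes "open U" "x \<in> U" "\<And>y. y \<in> U \<Longrightarrow> h y = h' y"
  shows "pd i h x = pd i h' x"
proof -
  obtain e where e: "e > 0" "ball x e \<subseteq> U" using assms(1,2) open_contains_ball by blast
  have "eventually (\<lambda>t. x + t *\<^sub>R axis i (1::real) \<in> U) (nhds 0)"
    unfolding eventually_nhds_metric
  proof (intro exI[of _ e] conjI allI impI)
    fix t :: real assume "dist t 0 < e"
    then have "x + t *\<^sub>R axis i 1 \<in> ball x e" by (simp add: dist_norm)
    then show "x + t *\<^sub>R axis i 1 \<in> U" using e by blast
  qed (use e in auto)
  then have "eventually (\<lambda>t. h (x + t *\<^sub>R axis i 1) = h' (x + t *\<^sub>R axis i 1)) (nhds 0)"
    by eventually_elim (simp add: assms(3))
  then show ?thesis unfolding pd_def by (rule deriv_cong_ev) simp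
qed

lemma pd_eqD: "h differentiable (at x) \<Longrightarrow> pd i h x = frechet_derivative h (at x) (axis i 1)"
  by (rule pd_eq) (simp add: frechet_derivative_works)

lemma pd_const: "pd i (\<lambda>y. c) x = 0"
  by (rule pd_eq[where D="\<lambda>_. 0", simplified]) (rule has_derivative_const)

lemma pd_add:
  assumes "a differentiable (at x)" "b differentiable (at x)"
  shows "pd i (\<lambda>y. a y + b y) x = pd i a x + pd i b x"
proof -
  obtain Da Db where d: "(a has_derivative Da) (at x)" "(b has_derivative Db) (at x)"
    using assms unfolding differentiable_def by blast
  then have "((\<lambda>y. a y + b y) has_derivative (\<lambda>h. Da h + Db h)) (at x)" by (rule has_derivative_add)
  from pd_eq[OF this] pd_eq[OF d(1)] pd_eq[OF d(2)] show ?thesis by simp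
qed

lemma pd_diff:
  assumes "a differentiable (at x)" "b differentiable (at x)"
  shows "pd i (\<lambda>y. a y - b y) x = pd i a x - pd i b x"
proof -
  obtain Da Db where d: "(a has_derivative Da) (at x)" "(b has_derivative Db) (at x)"
    using assms unfolding differentiable_def by blast
  then have "((\<lambda>y. a y - b y) has_derivative (\<lambda>h. Da h - Db h)) (at x)" by (rule has_derivative_diff)
  from pd_eq[OF this] pd_eq[OF d(1)] pd_eq[OF d(2)] show ?thesis by simp
qed

lemma pd_mult:
  fixes a b :: "real^4 \<Rightarrow> real"
  assumes "a differentiable (at x)" "b differentiable (at x)"
  shows "pd i (\<lambda>y. a y * b y) x = pd i a x * b x + a x * pd i b x"
proof -
  obtain Da Db where d: "(a has_derivative Da) (at x)" "(b has_derivative Db) (at x)"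
    using assms unfolding differentiable_def by blast
  have "((\<lambda>y. a y * b y) has_derivative (\<lambda>h. a x * Db h + Da h * b x)) (at x)"
    using has_derivative_mult[OF d] .
  from pd_eq[OF this] pd_eq[OF d(1)] pd_eq[OF d(2)] show ?thesis by simp
qed

lemma pd_cmult:
  assumes "a differentiable (at x)"
  shows "pd i (\<lambda>y. c * a y) x = c * pd i a x"
  using pd_mult[of "\<lambda>_. c" x a i] assms by (simp add: pd_const)

lemma pd_sum:
  assumes "finite S" "\<And>k. k \<in> S \<Longrightarrow> a k differentiable (at x)"
  shows "pd i (\<lambda>y. \<Sum>k\<in>S. a k y) x = (\<Sum>k\<in>S. pd i (a k) x)"
proof -
  have "\<forall>k\<in>S. (a k has_derivative frechet_derivative (a k) (at x)) (at x)"
    using assms(2) frechet_derivative_works by blast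
  then have "((\<lambda>y. \<Sum>k\<in>S. a k y) has_derivative (\<lambda>h. \<Sum>k\<in>S. frechet_derivative (a k) (at x) h)) (at x)"
    by (intro has_derivative_sum) blast
  then show ?thesis using pd_eqD assms(2) by (simp add: pd_eq)
qed

lemma diffs_snoc: "diffs (is @ [i]) h = diffs is (pd i h)"
  by (induction "is") auto

lemma diffs_cong:
  assumes "open U" "\<And>y. y \<in> U \<Longrightarrow> h y = h' y"
  shows "y \<in> U \<Longrightarrow> diffs is h y = diffs is h' y"
proof (induction "is" arbitrary: y)
  case Nil then show ?case using assms by simp
next
  case (Cons i js) then show ?case using pd_cong[OF assms(1) Cons.prems, of "diffs js h" "diffs js h'"] by simp
qed

lemma differentiable_on_cong_open:
  assumes "open U" "\<And>y. y \<in> U \<Longrightarrow> h y = h' y" "h differentiable_on U"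
  shows "h' differentiable_on U"
  unfolding differentiable_on_eq_differentiable_at[OF assms(1)]
proof
  fix x assume x: "x \<in> U"
  have "h differentiable (at x)" using assms(3) x differentiable_on_eq_differentiable_at[OF assms(1)] by blast
  then obtain D where "(h has_derivative D) (at x)" unfolding differentiable_def by blast
  then have "(h' has_derivative D) (at x)"
    by (rule has_derivative_transform_within_open[OF _ assms(1) x]) (use assms(2) in auto)
  then show "h' differentiable (at x)" unfolding differentiable_def by blast
qed

lemma smooth_on_cong:
  assumes "open U" "\<And>y. y \<in> U \<Longrightarrow> h y = h' y" "smooth_on U h"
  shows "smooth_on U h'"
  unfolding smooth_on_def
proof
  fix "is"
  have d: "diffs is h differentiable_on U" using assms(3) unfolding smooth_on_def by blast
  show "diffs is h' differentiable_on U"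
  proof (rule differentiable_on_cong_open[OF assms(1) _ d])
    fix y assume "y \<in> U"
    then show "diffs is h y = diffs is h' y" using diffs_cong[of U h h' y "is"] assms(1,2) by blast
  qed
qed

lemma smooth_diff_at:
  assumes "open U" "smooth_on U h" "x \<in> U"
  shows "h differentiable (at x)"
proof -
  have "diffs [] h differentiable_on U" using assms(2) unfolding smooth_on_def by blast
  then have "h differentiable_on U" by simp
  then show ?thesis using differentiable_on_eq_differentiable_at[OF assms(1)] assms(3) by blast
qed

lemma smooth_pd:
  assumes "smooth_on U h" shows "smooth_on U (pd i h)"
  using assms unfolding smooth_on_def by (metis diffs_snoc)

definition sm :: "nat \<Rightarrow> (real^4) set \<Rightarrow> (real^4 \<Rightarrow> real) \<Rightarrow> bool" where
  "sm n U h \<longleftrightarrow> (\<forall>is. length is \<le> n \<longrightarrow> diffs is h differentiable_on U)"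

lemma smooth_sm: "smooth_on U h \<longleftrightarrow> (\<forall>n. sm n U h)"
  unfolding smooth_on_def sm_def by blast

lemma sm_0: "sm 0 U h \<longleftrightarrow> h differentiable_on U"
  unfolding sm_def by simp

lemma sm_Suc: "sm (Suc n) U h \<longleftrightarrow> h differentiable_on U \<and> (\<forall>i. sm n U (pd i h))"
proof
  assume a: "sm (Suc n) U h"
  have "diffs [] h differentiable_on U" using a unfolding sm_def by (metis le0 list.size(3))
  then have "h differentiable_on U" by simp
  moreover have "sm n U (pd i h)" for i
    unfolding sm_def
  proof (intro allI impI)
    fix js :: "4 list" assume "length js \<le> n"
    then have "length (js @ [i]) \<le> Suc n" by simp
    then show "diffs js (pd i h) differentiable_on U" using a unfolding sm_def diffs_snoc[symmetric] by blast
  qed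
  ultimately show "h differentiable_on U \<and> (\<forall>i. sm n U (pd i h))" by blast
next
  assume a: "h differentiable_on U \<and> (\<forall>i. sm n U (pd i h))"
  show "sm (Suc n) U h"
    unfolding sm_def
  proof (intro allI impI)
    fix "is" :: "4 list" assume l: "length is \<le> Suc n"
    show "diffs is h differentiable_on U"
    proof (cases "is" rule: rev_exhaust)
      case Nil then show ?thesis using a by simp
    next
      case (snoc js i)
      then have "length js \<le> n" using l by simp
      then have "diffs js (pd i h) differentiable_on U" using a unfolding sm_def by blast
      then show ?thesis using snoc by (simp add: diffs_snoc)
    qed
  qed
qed

lemma sm_cong:
  assumes "open U" "\<And>y. y \<in> U \<Longrightarrow> h y = h' y" "sm n U h"
  shows "sm n U h'"
  unfolding sm_def
proof (intro allI impI)
  fix "is" :: "4 list" assume l: "length is \<le> n"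
  have d: "diffs is h differentiable_on U" using assms(3) l unfolding sm_def by blast
  show "diffs is h' differentiable_on U"
  proof (rule differentiable_on_cong_open[OF assms(1) _ d])
    fix y assume "y \<in> U"
    then show "diffs is h y = diffs is h' y" using diffs_cong[of U h h' y "is"] assms(1,2) by blast
  qed
qed

lemma don_at: "open U \<Longrightarrow> h differentiable_on U \<Longrightarrow> y \<in> U \<Longrightarrow> h differentiable (at y)"
  using differentiable_on_eq_differentiable_at by blast

lemma sm_diff_on: "sm n U h \<Longrightarrow> h differentiable_on U"
proof -
  assume "sm n U h"
  then have "diffs [] h differentiable_on U" unfolding sm_def by (metis le0 list.size(3))
  then show ?thesis by simp
qed

lemma sm_const: "sm n U (\<lambda>y. c)"
proof (induction n arbitrary: c)
  case 0 then show ?case by (simp add: sm_0)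
next
  case (Suc n)
  have "pd i (\<lambda>y. c) = (\<lambda>y. 0)" for i by (simp add: fun_eq_iff pd_const)
  then show ?case using Suc by (simp add: sm_Suc)
qed

lemma sm_add:
  assumes "open U" shows "sm n U a \<Longrightarrow> sm n U b \<Longrightarrow> sm n U (\<lambda>y. a y + b y)"
proof (induction n arbitrary: a b)
  case 0 then show ?case by (simp add: sm_0 differentiable_on_add)
next
  case (Suc n)
  have da: "a differentiable_on U" and db: "b differentiable_on U" using Suc.prems sm_Suc by blast+
  have "sm n U (pd i (\<lambda>y. a y + b y))" for i
  proof (rule sm_cong[OF assms])
    have "sm n U (pd i a)" "sm n U (pd i b)" using Suc.prems unfolding sm_Suc by blast+
    then show "sm n U (\<lambda>y. pd i a y + pd i b y)" using Suc.IH by blast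
    fix y assume "y \<in> U"
    then have "a differentiable (at y)" "b differentiable (at y)" using don_at[OF assms] da db by blast+
    then show "pd i a y + pd i b y = pd i (\<lambda>y. a y + b y) y" by (simp add: pd_add)
  qed
  moreover have "(\<lambda>y. a y + b y) differentiable_on U" using da db by (rule differentiable_on_add)
  ultimately show ?case unfolding sm_Suc by blast
qed

lemma sm_mult:
  assumes "open U" shows "sm n U a \<Longrightarrow> sm n U b \<Longrightarrow> sm n U (\<lambda>y. a y * b y)"
proof (induction n arbitrary: a b)
  case 0 then show ?case by (simp add: sm_0 differentiable_on_mult)
next
  case (Suc n)
  have da: "a differentiable_on U" and db: "b differentiable_on U" using Suc.prems sm_Suc by blast+
  have an: "sm n U a" and bn: "sm n U b" using Suc.prems unfolding sm_def by auto
  have "sm n U (pd i (\<lambda>y. a y * b y))" for i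
  proof (rule sm_cong[OF assms])
    have "sm n U (pd i a)" "sm n U (pd i b)" using Suc.prems unfolding sm_Suc by blast+
    then have "sm n U (\<lambda>y. pd i a y * b y)" "sm n U (\<lambda>y. a y * pd i b y)" using Suc.IH an bn by blast+
    then show "sm n U (\<lambda>y. pd i a y * b y + a y * pd i b y)"
      using sm_add[OF assms] by blast
    fix y assume "y \<in> U"
    then have "a differentiable (at y)" "b differentiable (at y)" using don_at[OF assms] da db by blast+
    then show "pd i a y * b y + a y * pd i b y = pd i (\<lambda>y. a y * b y) y" by (simp add: pd_mult)
  qed
  moreover have "(\<lambda>y. a y * b y) differentiable_on U" using da db by (rule differentiable_on_mult)
  ultimately show ?case unfolding sm_Suc by blast
qed

lemma sm_sum:
  assumes "open U" "finite S" shows "(\<And>k. k \<in> S \<Longrightarrow> sm n U (a k)) \<Longrightarrow> sm n U (\<lambda>y. \<Sum>k\<in>S. a k y)"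
  using assms(2)
proof (induction S rule: finite_induct)
  case empty then show ?case by (simp add: sm_const)
next
  case (insert k S)
  then show ?case using sm_add[OF assms(1), of n "a k" "\<lambda>y. \<Sum>k\<in>S. a k y"] by simp
qed

lemma sm_prod:
  assumes "open U" "finite S" shows "(\<And>k. k \<in> S \<Longrightarrow> sm n U (a k)) \<Longrightarrow> sm n U (\<lambda>y. \<Prod>k\<in>S. a k y)"
  using assms(2)
proof (induction S rule: finite_induct)
  case empty then show ?case by (simp add: sm_const)
next
  case (insert k S)
  then show ?case using sm_mult[OF assms(1), of n "a k" "\<lambda>y. \<Prod>k\<in>S. a k y"] by simp
qed

lemma pd_inverse:
  assumes "h differentiable (at x)" "h x \<noteq> 0"
  shows "pd i (\<lambda>y. inverse (h y)) x = - (inverse (h x) * pd i h x * inverse (h x))"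
proof -
  obtain D where d: "(h has_derivative D) (at x)" using assms unfolding differentiable_def by blast
  have "((\<lambda>y. inverse (h y)) has_derivative (\<lambda>v. - (inverse (h x) * D v * inverse (h x)))) (at x)"
    by (rule Deriv.has_derivative_inverse[OF assms(2) d])
  from pd_eq[OF this] pd_eq[OF d] show ?thesis by simp
qed


lemma sm_inverse:
  assumes "open U" "smooth_on U h" "\<And>y. y \<in> U \<Longrightarrow> h y \<noteq> 0"
  shows "sm n U (\<lambda>y. inverse (h y))"
proof (induction n)
  case 0
  have "(\<lambda>y. inverse (h y)) differentiable (at y)" if yU: "y \<in> U" for y
  proof -
    obtain D where d: "(h has_derivative D) (at y)"
      using smooth_diff_at[OF assms(1,2) yU] unfolding differentiable_def by blast
    show ?thesis using Deriv.has_derivative_inverse[OF assms(3)[OF yU] d] unfolding differentiable_def by blast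
  qed
  then show ?case unfolding sm_0 using differentiable_on_eq_differentiable_at[OF assms(1)] by blast
next
  case (Suc n)
  have d0: "(\<lambda>y. inverse (h y)) differentiable_on U" using Suc.IH sm_diff_on by blast
  have "sm n U (pd i (\<lambda>y. inverse (h y)))" for i
  proof (rule sm_cong[OF assms(1)])
    have "sm n U (pd i h)" using smooth_pd[OF assms(2)] smooth_sm by blast
    then have "sm n U (\<lambda>y. (-1) * pd i h y)" using sm_mult[OF assms(1) sm_const] by blast
    then have "sm n U (\<lambda>y. (-1) * pd i h y * inverse (h y))" using sm_mult[OF assms(1) _ Suc.IH] by blast
    then show "sm n U (\<lambda>y. (-1) * pd i h y * inverse (h y) * inverse (h y))" using sm_mult[OF assms(1) _ Suc.IH] by blast
    fix y assume y: "y \<in> U"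
    have "h differentiable (at y)" using smooth_diff_at[OF assms(1,2) y] .
    then show "(-1) * pd i h y * inverse (h y) * inverse (h y) = pd i (\<lambda>y. inverse (h y)) y"
      using pd_inverse assms(3)[OF y] by simp
  qed
  then show ?case using d0 unfolding sm_Suc by blast
qed

lemma smooth_const: "smooth_on U (\<lambda>y. c)"
  using sm_const smooth_sm by blast

lemma smooth_add: "open U \<Longrightarrow> smooth_on U a \<Longrightarrow> smooth_on U b \<Longrightarrow> smooth_on U (\<lambda>y. a y + b y)"
  unfolding smooth_sm by (intro allI sm_add) auto

lemma smooth_mult: "open U \<Longrightarrow> smooth_on U a \<Longrightarrow> smooth_on U b \<Longrightarrow> smooth_on U (\<lambda>y. a y * b y)"
  unfolding smooth_sm by (intro allI sm_mult) auto

lemma smooth_diff: "open U \<Longrightarrow> smooth_on U a \<Longrightarrow> smooth_on U b \<Longrightarrow> smooth_on U (\<lambda>y. a y - b y)"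
proof -
  assume u: "open U" and a: "smooth_on U a" and b: "smooth_on U b"
  have "smooth_on U (\<lambda>y. (-1) * b y)" using smooth_mult[OF u smooth_const b] .
  then have "smooth_on U (\<lambda>y. a y + (-1) * b y)" using smooth_add[OF u a] by blast
  then show ?thesis by simp
qed

lemma smooth_sum: "open U \<Longrightarrow> finite S \<Longrightarrow> (\<And>k. k \<in> S \<Longrightarrow> smooth_on U (a k)) \<Longrightarrow> smooth_on U (\<lambda>y. \<Sum>k\<in>S. a k y)"
  unfolding smooth_sm by (intro allI sm_sum) auto

lemma smooth_prod: "open U \<Longrightarrow> finite S \<Longrightarrow> (\<And>k. k \<in> S \<Longrightarrow> smooth_on U (a k)) \<Longrightarrow> smooth_on U (\<lambda>y. \<Prod>k\<in>S. a k y)"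
  unfolding smooth_sm by (intro allI sm_prod) auto

lemma smooth_inverse: "open U \<Longrightarrow> smooth_on U h \<Longrightarrow> (\<And>y. y \<in> U \<Longrightarrow> h y \<noteq> 0) \<Longrightarrow> smooth_on U (\<lambda>y. inverse (h y))"
  unfolding smooth_sm[of U "\<lambda>y. inverse (h y)"] by (intro allI sm_inverse) auto

lemma dir_deriv:
  assumes "h differentiable (at (y + s *\<^sub>R axis k 1))"
  shows "((\<lambda>\<sigma>. h (y + \<sigma> *\<^sub>R axis k 1)) has_real_derivative pd k h (y + s *\<^sub>R axis k 1)) (at s)"
proof -
  obtain D where d: "(h has_derivative D) (at (y + s *\<^sub>R axis k 1))"
    using assms unfolding differentiable_def by blast
  show ?thesis using line_deriv[OF d] pd_eq[OF d] by simp
qed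

lemma young_half:
  fixes h :: "real^4 \<Rightarrow> real"
  assumes U: "open U" "smooth_on U h" "ball x r \<subseteq> U" and t: "0 < t" "2*t < r"
  shows "\<exists>p. dist p x < 2*t \<and>
    h (x + t *\<^sub>R axis i 1 + t *\<^sub>R axis j 1) - h (x + t *\<^sub>R axis i 1) - h (x + t *\<^sub>R axis j 1) + h x
      = t^2 * pd j (pd i h) p"
proof -
  define ei :: "real^4" where "ei = axis i 1"
  define ej :: "real^4" where "ej = axis j 1"
  have nei: "norm ei = 1" "norm ej = 1" by (simp_all add: ei_def ej_def)
  have mem: "x + s *\<^sub>R ei + \<tau> *\<^sub>R ej \<in> U" if "0 \<le> s" "s \<le> t" "0 \<le> \<tau>" "\<tau> \<le> t" for s \<tau>
  proof -
    have "norm (s *\<^sub>R ei + \<tau> *\<^sub>R ej) \<le> norm (s *\<^sub>R ei) + norm (\<tau> *\<^sub>R ej)" by (rule norm_triangle_ineq)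
    also have "\<dots> = s + \<tau>" using nei that by simp
    finally have "norm (s *\<^sub>R ei + \<tau> *\<^sub>R ej) < r" using that t by linarith
    moreover have "dist x (x + s *\<^sub>R ei + \<tau> *\<^sub>R ej) = norm (s *\<^sub>R ei + \<tau> *\<^sub>R ej)"
      by (simp add: dist_norm norm_minus_commute add_ac)
    ultimately have "x + s *\<^sub>R ei + \<tau> *\<^sub>R ej \<in> ball x r" by simp
    then show ?thesis using U(3) by blast
  qed
  have dh: "h differentiable (at z)" if "z \<in> U" for z using smooth_diff_at[OF U(1,2) that] .
  have dph: "pd i h differentiable (at z)" if "z \<in> U" for z using smooth_diff_at[OF U(1) smooth_pd[OF U(2)] that] .
  define \<phi> where "\<phi> \<sigma> = h ((x + t *\<^sub>R ej) + \<sigma> *\<^sub>R ei) - h (x + \<sigma> *\<^sub>R ei)" for \<sigma>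
  have D1: "DERIV \<phi> \<sigma> :> pd i h ((x + t *\<^sub>R ej) + \<sigma> *\<^sub>R ei) - pd i h (x + \<sigma> *\<^sub>R ei)"
    if "0 \<le> \<sigma>" "\<sigma> \<le> t" for \<sigma>
  proof -
    have m1: "(x + t *\<^sub>R ej) + \<sigma> *\<^sub>R ei \<in> U" using mem[of \<sigma> t] that t by (simp add: algebra_simps)
    have m2: "x + \<sigma> *\<^sub>R ei \<in> U" using mem[of \<sigma> 0] that t by simp
    show ?thesis unfolding \<phi>_def[abs_def] ei_def
      by (intro DERIV_diff dir_deriv dh) (use m1 m2 ei_def in auto)
  qed
  then obtain \<xi> where xi: "0 < \<xi>" "\<xi> < t"
    "\<phi> t - \<phi> 0 = (t - 0) * (pd i h ((x + t *\<^sub>R ej) + \<xi> *\<^sub>R ei) - pd i h (x + \<xi> *\<^sub>R ei))"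
    using MVT2[OF t(1), of \<phi> "\<lambda>\<sigma>. pd i h ((x + t *\<^sub>R ej) + \<sigma> *\<^sub>R ei) - pd i h (x + \<sigma> *\<^sub>R ei)"] D1 by auto
  define \<psi> where "\<psi> \<tau> = pd i h ((x + \<xi> *\<^sub>R ei) + \<tau> *\<^sub>R ej)" for \<tau>
  have D2: "DERIV \<psi> \<tau> :> pd j (pd i h) ((x + \<xi> *\<^sub>R ei) + \<tau> *\<^sub>R ej)"
    if "0 \<le> \<tau>" "\<tau> \<le> t" for \<tau>
  proof -
    have m1: "(x + \<xi> *\<^sub>R ei) + \<tau> *\<^sub>R ej \<in> U" using mem[of \<xi> \<tau>] that xi by simp
    show ?thesis unfolding \<psi>_def[abs_def] ej_def
      by (intro dir_deriv dph) (use m1 ej_def in auto)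
  qed
  then obtain \<eta> where eta: "0 < \<eta>" "\<eta> < t"
    "\<psi> t - \<psi> 0 = (t - 0) * pd j (pd i h) ((x + \<xi> *\<^sub>R ei) + \<eta> *\<^sub>R ej)"
    using MVT2[OF t(1), of \<psi> "\<lambda>\<tau>. pd j (pd i h) ((x + \<xi> *\<^sub>R ei) + \<tau> *\<^sub>R ej)"] D2 by auto
  define p where "p = (x + \<xi> *\<^sub>R ei) + \<eta> *\<^sub>R ej"
  have "dist p x = norm (\<xi> *\<^sub>R ei + \<eta> *\<^sub>R ej)" by (simp add: p_def dist_norm)
  also have "\<dots> \<le> norm (\<xi> *\<^sub>R ei) + norm (\<eta> *\<^sub>R ej)" by (rule norm_triangle_ineq)
  also have "\<dots> = \<xi> + \<eta>" using nei xi eta by simp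
  finally have dp: "dist p x < 2 * t" using xi eta by linarith
  have e1: "\<psi> t = pd i h ((x + t *\<^sub>R ej) + \<xi> *\<^sub>R ei)" unfolding \<psi>_def by (simp add: algebra_simps)
  have e2: "\<psi> 0 = pd i h (x + \<xi> *\<^sub>R ei)" unfolding \<psi>_def by simp
  have "h (x + t *\<^sub>R ei + t *\<^sub>R ej) - h (x + t *\<^sub>R ei) - h (x + t *\<^sub>R ej) + h x = \<phi> t - \<phi> 0"
    unfolding \<phi>_def by (simp add: algebra_simps)
  also have "\<dots> = t * (\<psi> t - \<psi> 0)" using xi(3) e1 e2 by simp
  also have "\<dots> = t^2 * pd j (pd i h) p" using eta(3) by (simp add: p_def power2_eq_square)
  finally show ?thesis using dp unfolding ei_def ej_def by blast
qed

lemma pd_swap: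
  fixes h :: "real^4 \<Rightarrow> real"
  assumes U: "open U" "smooth_on U h" "x \<in> U"
  shows "pd i (pd j h) x = pd j (pd i h) x"
proof (rule ccontr)
  assume ne: "pd i (pd j h) x \<noteq> pd j (pd i h) x"
  define a where "a = pd j (pd i h)"
  define b where "b = pd i (pd j h)"
  define \<epsilon> where "\<epsilon> = \<bar>a x - b x\<bar> / 2"
  have ep: "\<epsilon> > 0" using ne by (simp add: \<epsilon>_def a_def b_def)
  have ca: "continuous (at x) a" unfolding a_def
    by (rule differentiable_imp_continuous_within, rule smooth_diff_at[OF U(1) _ U(3)])
       (intro smooth_pd U(2))
  have cb: "continuous (at x) b" unfolding b_def
    by (rule differentiable_imp_continuous_within, rule smooth_diff_at[OF U(1) _ U(3)])
       (intro smooth_pd U(2))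
  obtain da where da: "da > 0" "\<And>y. dist y x < da \<Longrightarrow> dist (a y) (a x) < \<epsilon>"
    using ca ep unfolding continuous_at_eps_delta by blast
  obtain db where db: "db > 0" "\<And>y. dist y x < db \<Longrightarrow> dist (b y) (b x) < \<epsilon>"
    using cb ep unfolding continuous_at_eps_delta by blast
  obtain r where r: "r > 0" "ball x r \<subseteq> U" using U(1,3) open_contains_ball by blast
  define t where "t = min (min da db) r / 3"
  have t: "0 < t" "2*t < r" "2*t < da" "2*t < db" using da db r by (auto simp: t_def)
  obtain p1 where p1: "dist p1 x < 2*t"
    "h (x + t *\<^sub>R axis i 1 + t *\<^sub>R axis j 1) - h (x + t *\<^sub>R axis i 1) - h (x + t *\<^sub>R axis j 1) + h x
      = t^2 * a p1"
    using young_half[OF U(1,2) r(2) t(1,2), of i j] unfolding a_def by blast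
  obtain p2 where p2: "dist p2 x < 2*t"
    "h (x + t *\<^sub>R axis j 1 + t *\<^sub>R axis i 1) - h (x + t *\<^sub>R axis j 1) - h (x + t *\<^sub>R axis i 1) + h x
      = t^2 * b p2"
    using young_half[OF U(1,2) r(2) t(1,2), of j i] unfolding b_def by blast
  have "x + t *\<^sub>R axis j 1 + t *\<^sub>R axis i 1 = x + t *\<^sub>R axis i 1 + t *\<^sub>R axis j 1"
    by (simp add: algebra_simps)
  then have "h (x + t *\<^sub>R axis j 1 + t *\<^sub>R axis i 1) = h (x + t *\<^sub>R axis i 1 + t *\<^sub>R axis j 1)" by (rule arg_cong)
  then have "t^2 * a p1 = t^2 * b p2" using p1(2) p2(2) by linarith
  then have eq: "a p1 = b p2" using t(1) by simp
  have "dist (a p1) (a x) < \<epsilon>" using da(2) p1(1) t by simp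
  moreover have "dist (b p2) (b x) < \<epsilon>" using db(2) p2(1) t by simp
  ultimately have "\<bar>a x - b x\<bar> < 2 * \<epsilon>" using eq by (simp add: dist_real_def)
  then show False by (simp add: \<epsilon>_def)
qed

lemma sum_single: "(\<And>j. j \<noteq> i \<Longrightarrow> F j = 0) \<Longrightarrow> (\<Sum>j\<in>UNIV. F j) = F (i::4)"
proof -
  assume a: "\<And>j. j \<noteq> i \<Longrightarrow> F j = 0"
  have "(\<Sum>j\<in>UNIV. F j) = (\<Sum>j\<in>{i}. F j)" by (rule sum.mono_neutral_right) (use a in auto)
  then show ?thesis by simp
qed

lemma prod_single: "(\<And>j. j \<noteq> i \<Longrightarrow> F j = 1) \<Longrightarrow> (\<Prod>j\<in>UNIV. F j) = F (i::4)"
proof -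
  assume a: "\<And>j. j \<noteq> i \<Longrightarrow> F j = 1"
  have "(\<Prod>j\<in>UNIV. F j) = (\<Prod>j\<in>{i}. F j)" by (rule prod.mono_neutral_right) (use a in auto)
  then show ?thesis by simp
qed

lemma sum4_delta: "(\<Sum>j\<in>UNIV. (if (i::4) = j then 1 else 0) * (X j::real)) = X i"
  by (subst sum_single[of i]) auto

lemma sum4_delta': "(\<Sum>j\<in>UNIV. X j * (if j = (i::4) then 1 else 0)) = (X i::real)"
  by (subst sum_single[of i]) auto

lemma gmat_inv:
  fixes M :: "real^4^4"
  assumes "det M \<noteq> 0"
  shows "M ** matrix_inv M = mat 1" "matrix_inv M ** M = mat 1"
proof -
  have "invertible M" using assms invertible_det_nz by blast
  then have "\<exists>A'. M ** A' = mat 1 \<and> A' ** M = mat 1" unfolding invertible_def by blast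
  then have "M ** matrix_inv M = mat 1 \<and> matrix_inv M ** M = mat 1"
    unfolding matrix_inv_def by (rule someI_ex)
  then show "M ** matrix_inv M = mat 1" "matrix_inv M ** M = mat 1" by auto
qed

lemma det_smooth:
  assumes "open U" "\<And>i j. smooth_on U (\<lambda>y. F y i j)"
  shows "smooth_on U (\<lambda>y. det (\<chi> i j. F y i j :: real^4^4))"
proof -
  have fin: "finite {p. p permutes (UNIV::4 set)}" by (simp add: finite_permutations)
  have "smooth_on U (\<lambda>y. \<Sum>p\<in>{p. p permutes (UNIV::4 set)}. of_int (sign p) * (\<Prod>i\<in>UNIV. F y i (p i)))"
    by (intro smooth_sum[OF assms(1) fin] smooth_mult[OF assms(1)] smooth_const smooth_prod[OF assms(1)] assms(2)) auto
  then show ?thesis unfolding det_def by simp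
qed

locale lmet =
  fixes U :: "(real^4) set" and g :: metric
  assumes U_open: "open U" and lm: "lorentz_metric U g"
begin

lemma g_smooth: "smooth_on U (\<lambda>y. g y i j)"
  using lm unfolding lorentz_metric_def by blast

lemma g_sym: "y \<in> U \<Longrightarrow> g y i j = g y j i"
  using lm unfolding lorentz_metric_def lorentzian_at_def by blast

lemma gdet: assumes y: "y \<in> U" shows "det (\<chi> a b. g y a b) \<noteq> 0"
proof -
  obtain e :: "4 \<Rightarrow> real^4" where e: "\<And>a b. bil g y (e a) (e b) = (if a = b then (if a = 0 then -1 else 1) else 0)"
    using lm y unfolding lorentz_metric_def lorentzian_at_def by blast
  define M :: "real^4^4" where "M = (\<chi> a b. g y a b)"
  define E :: "real^4^4" where "E = (\<chi> i a. e a $ i)"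
  define D :: "real^4^4" where "D = (\<chi> a b. if a = b then (if a = 0 then -1 else 1) else 0)"
  have "(transpose E ** M ** E) $ a $ b = D $ a $ b" for a b
  proof -
    have "(transpose E ** M ** E) $ a $ b = (\<Sum>j\<in>UNIV. (\<Sum>i\<in>UNIV. e a $ i * g y i j) * e b $ j)"
      by (simp add: matrix_matrix_mult_def transpose_def E_def M_def)
    also have "\<dots> = (\<Sum>j\<in>UNIV. \<Sum>i\<in>UNIV. g y i j * e a $ i * e b $ j)"
      by (simp add: sum_distrib_right sum_distrib_left mult_ac)
    also have "\<dots> = bil g y (e a) (e b)" unfolding bil_def by (rule sum.swap)
    finally show ?thesis using e by (simp add: D_def)
  qed
  then have eq: "transpose E ** M ** E = D" by (simp add: vec_eq_iff)
  have "det D = (\<Prod>i\<in>UNIV. D $ i $ i)" by (rule det_diagonal) (simp add: D_def)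
  also have "\<dots> = (\<Prod>i\<in>UNIV. if (i::4) = 0 then -1 else (1::real))" by (rule prod.cong) (simp_all add: D_def)
  also have "\<dots> = (if (0::4) = 0 then -1 else 1)" by (rule prod_single) auto
  also have "\<dots> = -1" by simp
  finally have "det D = -1" .
  moreover have "det (transpose E ** M ** E) = det E * det M * det E" by (simp add: det_mul)
  ultimately have "det E * det M * det E = -1" using eq by simp
  then show ?thesis unfolding M_def by auto
qed

lemma ginv_r: assumes "y \<in> U" shows "(\<Sum>j\<in>UNIV. g y i j * ginv g y j k) = (if i = k then 1 else 0)"
proof -
  have "(\<chi> a b. g y a b) ** matrix_inv (\<chi> a b. g y a b) = mat 1" using gmat_inv(1)[OF gdet[OF assms]] .
  then have "((\<chi> a b. g y a b) ** matrix_inv (\<chi> a b. g y a b)) $ i $ k = mat 1 $ i $ k" by simp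
  then show ?thesis by (simp add: matrix_matrix_mult_def ginv_def mat_def)
qed

lemma ginv_l: assumes "y \<in> U" shows "(\<Sum>j\<in>UNIV. ginv g y i j * g y j k) = (if i = k then 1 else 0)"
proof -
  have "matrix_inv (\<chi> a b. g y a b) ** (\<chi> a b. g y a b) = mat 1" using gmat_inv(2)[OF gdet[OF assms]] .
  then have "(matrix_inv (\<chi> a b. g y a b) ** (\<chi> a b. g y a b)) $ i $ k = mat 1 $ i $ k" by simp
  then show ?thesis by (simp add: matrix_matrix_mult_def ginv_def mat_def)
qed

lemma ginv_sym: assumes y: "y \<in> U" shows "ginv g y i j = ginv g y j i"
proof -
  define M :: "real^4^4" where "M = (\<chi> a b. g y a b)"
  define G where "G = matrix_inv M"
  have MG: "M ** G = mat 1" "G ** M = mat 1" using gmat_inv[OF gdet[OF y]] unfolding M_def G_def by auto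
  have tM: "transpose M = M" using g_sym[OF y] by (simp add: M_def transpose_def vec_eq_iff)
  have "transpose G ** M = mat 1"
    using arg_cong[OF MG(1), of transpose] by (simp add: matrix_transpose_mul tM)
  then have "transpose G = G"
    by (metis MG(1) matrix_mul_assoc matrix_mul_lid matrix_mul_rid)
  then have "transpose G $ i $ j = G $ i $ j" by simp
  then show ?thesis by (simp add: ginv_def transpose_def G_def M_def)
qed

lemma ginv_cramer:
  assumes y: "y \<in> U"
  shows "ginv g y k c = det (\<chi> i j. if j = k then (if i = c then 1 else 0) else g y i j) / det (\<chi> a b. g y a b)"
proof -
  have MG: "(\<chi> a b. g y a b) ** matrix_inv (\<chi> a b. g y a b) = mat 1" using gmat_inv[OF gdet[OF y]] by auto
  have "(\<chi> a b. g y a b) *v (matrix_inv (\<chi> a b. g y a b) *v axis c 1) = axis c 1"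
    by (simp add: matrix_vector_mul_assoc MG)
  then have "matrix_inv (\<chi> a b. g y a b) *v axis c 1 = (\<chi> k. det (\<chi> i j. if j = k then (axis c 1) $ i else (\<chi> a b. g y a b) $ i $ j) / det (\<chi> a b. g y a b))"
    using cramer[OF gdet[OF y]] by blast
  then have c1: "(matrix_inv (\<chi> a b. g y a b) *v axis c 1) $ k = det (\<chi> i j. if j = k then (axis c (1::real)) $ i else (\<chi> a b. g y a b) $ i $ j) / det (\<chi> a b. g y a b)" by simp
  have c2: "(\<chi> i j. if j = k then (axis c (1::real)) $ i else (\<chi> a b. g y a b) $ i $ j) = (\<chi> i j. if j = k then (if i = c then 1 else 0) else g y i j)"
    by (simp add: axis_def fun_eq_iff)
  have "(matrix_inv (\<chi> a b. g y a b) *v axis c 1) $ k = matrix_inv (\<chi> a b. g y a b) $ k $ c"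
    by (simp add: matrix_vector_mult_def axis_def if_distrib cong: if_cong)
  then show ?thesis using c1 c2 by (simp add: ginv_def)
qed

lemma ginv_smooth: "smooth_on U (\<lambda>y. ginv g y k c)"
proof -
  have s1: "smooth_on U (\<lambda>y. det (\<chi> i j. if j = k then (if i = c then 1 else 0) else g y i j :: real^4^4))"
    apply (rule det_smooth[OF U_open])
    subgoal for i j by (cases "j = k"; cases "i = c") (simp_all add: smooth_const g_smooth)
    done
  have s2: "smooth_on U (\<lambda>y. inverse (det (\<chi> a b. g y a b :: real^4^4)))"
    by (rule smooth_inverse[OF U_open det_smooth[OF U_open g_smooth] gdet])
  have "smooth_on U (\<lambda>y. det (\<chi> i j. if j = k then (if i = c then 1 else 0) else g y i j :: real^4^4)
        * inverse (det (\<chi> a b. g y a b :: real^4^4)))"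
    by (rule smooth_mult[OF U_open s1 s2])
  then show ?thesis
    by (rule smooth_on_cong[OF U_open, rotated]) (simp add: ginv_cramer divide_inverse)
qed

end

type_synonym t1 = "4 \<Rightarrow> real"
type_synonym t2 = "4 \<Rightarrow> 4 \<Rightarrow> real"
type_synonym t3 = "4 \<Rightarrow> 4 \<Rightarrow> 4 \<Rightarrow> real"

lemma delta_sum1: "(\<Sum>j\<in>UNIV. X j * (if j = (i::4) then 1 else 0)) = (X i :: real)"
  by (rule sum4_delta')

lemma delta_sum2: "(\<Sum>j\<in>UNIV. X j * (if (i::4) = j then 1 else 0)) = (X i :: real)"
  by (subst sum_single[of i]) auto

lemma dsum3: "(\<Sum>j\<in>UNIV. (if j = (i::4) then 1 else 0) * X j) = (X i :: real)"
  by (subst sum_single[of i]) auto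
lemma dsum4: "(\<Sum>j\<in>UNIV. (if (i::4) = j then 1 else 0) * X j) = (X i :: real)"
  by (subst sum_single[of i]) auto

lemma mult_if0_r: "(a::real) * (if P then b else 0) = (if P then a * b else 0)" by simp
lemma mult_if0_l: "(if P then b else 0) * (a::real) = (if P then b * a else 0)" by simp

lemmas dsum = delta_sum1 delta_sum2 dsum3 dsum4 mult_if0_r mult_if0_l sum.delta sum.delta'

lemma alg_dG:
  fixes gg G :: t2 and Gm dg dG :: t3
  assumes GL: "\<And>i k. (\<Sum>j\<in>UNIV. G i j * gg j k) = (if i = k then 1 else 0)"
    and GR: "\<And>i k. (\<Sum>j\<in>UNIV. gg i j * G j k) = (if i = k then 1 else 0)"
    and D: "\<And>a c. (\<Sum>b\<in>UNIV. dg i a b * G b c + gg a b * dG i b c) = 0"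
    and MC: "\<And>a b. dg i a b = (\<Sum>m\<in>UNIV. Gm m i a * gg m b + Gm m i b * gg a m)"
  shows "dG i d c = - (\<Sum>a\<in>UNIV. G d a * Gm c i a + Gm d i a * G a c)"
proof -
  have s1: "(\<Sum>a\<in>UNIV. G d a * (\<Sum>b\<in>UNIV. gg a b * dG i b c)) = (\<Sum>b\<in>UNIV. (\<Sum>a\<in>UNIV. G d a * gg a b) * dG i b c)"
    unfolding UNIV_4 by (simp add: algebra_simps)
  also have "\<dots> = dG i d c" unfolding GL by (simp add: dsum)
  finally have s1': "dG i d c = (\<Sum>a\<in>UNIV. G d a * (\<Sum>b\<in>UNIV. gg a b * dG i b c))" by simp
  have s2: "(\<Sum>b\<in>UNIV. gg a b * dG i b c) = - (\<Sum>b\<in>UNIV. dg i a b * G b c)" for a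
    using D[of a c] unfolding sum.distrib by linarith
  have "(\<Sum>a\<in>UNIV. G d a * (\<Sum>b\<in>UNIV. dg i a b * G b c))
      = (\<Sum>a\<in>UNIV. \<Sum>m\<in>UNIV. G d a * Gm m i a * (\<Sum>b\<in>UNIV. gg m b * G b c))
        + (\<Sum>b\<in>UNIV. \<Sum>m\<in>UNIV. (\<Sum>a\<in>UNIV. G d a * gg a m) * Gm m i b * G b c)"
    unfolding MC UNIV_4 by (simp add: algebra_simps)
  also have "\<dots> = (\<Sum>a\<in>UNIV. G d a * Gm c i a) + (\<Sum>b\<in>UNIV. Gm d i b * G b c)"
    unfolding GL GR by (simp add: dsum)
  finally have s3: "(\<Sum>a\<in>UNIV. G d a * (\<Sum>b\<in>UNIV. dg i a b * G b c)) = (\<Sum>a\<in>UNIV. G d a * Gm c i a + Gm d i a * G a c)"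
    by (simp add: sum.distrib)
  show ?thesis unfolding s1' s2 using s3 by (simp add: sum_negf)
qed

lemma alg_chr_lower:
  fixes G gg :: t2 and T :: t1
  assumes GL: "\<And>l j. (\<Sum>m\<in>UNIV. G l m * gg m j) = (if l = j then 1 else 0)"
    and Gs: "\<And>a b. G a b = G b a"
  shows "(\<Sum>m\<in>UNIV. (c * (\<Sum>l\<in>UNIV. G m l * T l)) * gg m j) = c * T j"
proof -
  have "(\<Sum>m\<in>UNIV. (c * (\<Sum>l\<in>UNIV. G m l * T l)) * gg m j) = c * (\<Sum>l\<in>UNIV. T l * (\<Sum>m\<in>UNIV. G l m * gg m j))"
    unfolding UNIV_4 by (simp add: algebra_simps Gs)
  also have "\<dots> = c * T j" unfolding GL by (simp add: dsum)
  finally show ?thesis .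
qed

lemma alg_lower:
  fixes G gg :: t2 and df :: t1
  assumes GR: "\<And>i k. (\<Sum>j\<in>UNIV. gg i j * G j k) = (if i = k then 1 else 0)"
  shows "(\<Sum>l\<in>UNIV. gg p l * (\<Sum>j\<in>UNIV. G l j * df j)) = df p"
proof -
  have "(\<Sum>l\<in>UNIV. gg p l * (\<Sum>j\<in>UNIV. G l j * df j)) = (\<Sum>j\<in>UNIV. (\<Sum>l\<in>UNIV. gg p l * G l j) * df j)"
    unfolding UNIV_4 by (simp add: algebra_simps)
  also have "\<dots> = df p" unfolding GR by (simp add: dsum)
  finally show ?thesis .
qed

lemma alg_bil:
  fixes gg :: t2 and v df :: t1
  assumes "\<And>p. (\<Sum>l\<in>UNIV. gg p l * v l) = df p"
  shows "(\<Sum>i\<in>UNIV. \<Sum>j\<in>UNIV. gg i j * v i * v j) = (\<Sum>i\<in>UNIV. df i * v i)"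
proof -
  have "(\<Sum>i\<in>UNIV. \<Sum>j\<in>UNIV. gg i j * v i * v j) = (\<Sum>i\<in>UNIV. (\<Sum>j\<in>UNIV. gg i j * v j) * v i)"
    unfolding UNIV_4 by (simp add: algebra_simps)
  then show ?thesis using assms by simp
qed

lemma alg_HV:
  fixes G H ddf :: t2 and Gm dG :: t3 and df :: t1
  assumes Gs: "\<And>a b. G a b = G b a"
    and dG: "\<And>a b. dG i a b = - (\<Sum>c\<in>UNIV. G a c * Gm b i c + Gm a i c * G c b)"
    and ddf: "\<And>a. ddf i a = H i a + (\<Sum>m\<in>UNIV. Gm m i a * df m)"
    and D: "(\<Sum>a\<in>UNIV. \<Sum>b\<in>UNIV. dG i a b * df a * df b + G a b * ddf i a * df b + G a b * df a * ddf i b) = 0"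
  shows "(\<Sum>a\<in>UNIV. H i a * (\<Sum>b\<in>UNIV. G a b * df b)) = 0"
proof -
  have "(\<Sum>a\<in>UNIV. \<Sum>b\<in>UNIV. dG i a b * df a * df b + G a b * ddf i a * df b + G a b * df a * ddf i b)
     = 2 * (\<Sum>a\<in>UNIV. H i a * (\<Sum>b\<in>UNIV. G a b * df b))"
    unfolding dG ddf UNIV_4 by (simp add: algebra_simps Gs)
  then show ?thesis using D by simp
qed

lemma alg_ricci:
  fixes dH dddf Gm :: t3 and dGm :: "4 \<Rightarrow> 4 \<Rightarrow> 4 \<Rightarrow> 4 \<Rightarrow> real" and ddf H :: t2 and df :: t1
  assumes dH: "\<And>a j k. dH a j k = dddf a j k - (\<Sum>m\<in>UNIV. dGm a m j k * df m + Gm m j k * ddf a m)"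
    and ddf: "\<And>a m. ddf a m = H a m + (\<Sum>p\<in>UNIV. Gm p a m * df p)"
    and dddf: "\<And>a b k. dddf a b k = dddf b a k"
    and Gms: "\<And>m a b. Gm m a b = Gm m b a"
  shows "(dH i j k - (\<Sum>m\<in>UNIV. Gm m i j * H m k + Gm m i k * H j m))
       - (dH j i k - (\<Sum>m\<in>UNIV. Gm m j i * H m k + Gm m j k * H i m))
       = - (\<Sum>p\<in>UNIV. (dGm i p j k - dGm j p i k
            + (\<Sum>m\<in>UNIV. Gm m j k * Gm p i m - Gm m i k * Gm p j m)) * df p)"
  unfolding dH ddf UNIV_4 by (simp add: algebra_simps dddf[of j i k] Gms[of _ j i])

lemma alg_covric:
  fixes gg Rc H ddf dRc :: t2 and dg dH Gm :: t3 and df dlam :: t1 and lam mu :: real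
  assumes dRc: "\<And>j k. dRc j k = dlam i * gg j k + lam * dg i j k - dH i j k + mu * (ddf i j * df k + df j * ddf i k)"
    and MC: "\<And>j k. dg i j k = (\<Sum>m\<in>UNIV. Gm m i j * gg m k + Gm m i k * gg j m)"
    and ddf: "\<And>a m. ddf a m = H a m + (\<Sum>p\<in>UNIV. Gm p a m * df p)"
    and Rc: "\<And>a b. Rc a b = lam * gg a b - H a b + mu * df a * df b"
  shows "dRc j k - (\<Sum>m\<in>UNIV. Gm m i j * Rc m k + Gm m i k * Rc j m)
       = dlam i * gg j k - (dH i j k - (\<Sum>m\<in>UNIV. Gm m i j * H m k + Gm m i k * H j m))
         + mu * (H i j * df k + df j * H i k)"
  unfolding dRc MC ddf Rc UNIV_4 by (simp add: algebra_simps)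

lemma alg_R3:
  fixes dH Gm :: t3 and H ddf :: t2 and df :: t1
  assumes D: "dH i j k * df l + H j k * ddf i l = dH i l k * df j + H l k * ddf i j"
    and H: "\<And>a b. H a b = psi * df a * df b"
    and ddf: "\<And>a m. ddf a m = H a m + (\<Sum>p\<in>UNIV. Gm p a m * df p)"
  shows "(dH i j k - (\<Sum>m\<in>UNIV. Gm m i j * H m k + Gm m i k * H j m)) * df l
       = (dH i l k - (\<Sum>m\<in>UNIV. Gm m i l * H m k + Gm m i k * H l m)) * df j"
proof -
  have D': "dH i j k * df l + psi * df j * df k * (psi * df i * df l + (\<Sum>p\<in>UNIV. Gm p i l * df p))
     = dH i l k * df j + psi * df l * df k * (psi * df i * df j + (\<Sum>p\<in>UNIV. Gm p i j * df p))"
    using D unfolding ddf H .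
  show ?thesis unfolding H using D' unfolding UNIV_4 by (simp add: algebra_simps)
qed

lemma tr1:
  fixes gg G :: t2
  assumes GL: "\<And>i k. (\<Sum>j\<in>UNIV. G i j * gg j k) = (if i = k then 1 else 0)"
    and ggs: "\<And>a b. gg a b = gg b a"
  shows "(\<Sum>j\<in>UNIV. \<Sum>k\<in>UNIV. G j k * gg j k) = 4"
proof -
  have "(\<Sum>j\<in>UNIV. \<Sum>k\<in>UNIV. G j k * gg j k) = (\<Sum>j\<in>UNIV. \<Sum>k\<in>UNIV. G j k * gg k j)"
    by (simp add: ggs)
  also have "\<dots> = (\<Sum>j\<in>(UNIV::4 set). (1::real))" unfolding GL by simp
  finally show ?thesis by simp
qed

lemma tr2:
  fixes gg G :: t2 and X :: t1
  assumes GR: "\<And>i k. (\<Sum>j\<in>UNIV. gg i j * G j k) = (if i = k then 1 else 0)"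
    and Gs: "\<And>a b. G a b = G b a"
  shows "(\<Sum>j\<in>UNIV. \<Sum>k\<in>UNIV. G j k * X j * gg i k) = X i"
proof -
  have "(\<Sum>j\<in>UNIV. \<Sum>k\<in>UNIV. G j k * X j * gg i k) = (\<Sum>j\<in>UNIV. X j * (\<Sum>k\<in>UNIV. gg i k * G k j))"
    unfolding UNIV_4 by (simp add: algebra_simps Gs)
  also have "\<dots> = X i" unfolding GR by (simp add: dsum)
  finally show ?thesis .
qed

lemma alg_RcV:
  fixes gg G Rc H :: t2 and df v :: t1
  assumes lower: "\<And>p. (\<Sum>l\<in>UNIV. gg p l * v l) = df p"
    and N: "(\<Sum>k\<in>UNIV. df k * v k) = 0"
    and HV: "(\<Sum>a\<in>UNIV. H i a * v a) = 0"
    and qE: "\<And>a b. Rc a b = lam * gg a b - H a b + mu * df a * df b"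
  shows "(\<Sum>a\<in>UNIV. Rc i a * v a) = lam * df i"
proof -
  have "(\<Sum>a\<in>UNIV. Rc i a * v a) = lam * (\<Sum>a\<in>UNIV. gg i a * v a) - (\<Sum>a\<in>UNIV. H i a * v a) + mu * df i * (\<Sum>k\<in>UNIV. df k * v k)"
    unfolding qE UNIV_4 by (simp add: algebra_simps)
  then show ?thesis using lower HV N by simp
qed

lemma alg_lam0:
  fixes gg G :: t2 and df v :: t1 and Rv :: t3
  assumes GL: "\<And>i k. (\<Sum>j\<in>UNIV. G i j * gg j k) = (if i = k then 1 else 0)"
    and GR: "\<And>i k. (\<Sum>j\<in>UNIV. gg i j * G j k) = (if i = k then 1 else 0)"
    and Gs: "\<And>a b. G a b = G b a" and ggs: "\<And>a b. gg a b = gg b a"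
    and v: "\<And>k. v k = (\<Sum>j\<in>UNIV. G k j * df j)"
    and N: "(\<Sum>k\<in>UNIV. df k * v k) = 0"
    and Rv: "\<And>i j k. Rv i j k = -(lam/3) * (df i * gg j k - df j * gg i k)"
    and S: "\<And>i j k l. Rv i j k * df l = Rv i j l * df k"
    and nz: "df i0 \<noteq> 0"
  shows "lam = 0"
proof -
  let ?i = i0
  have z: "(\<Sum>j\<in>UNIV. \<Sum>k\<in>UNIV. G j k * (Rv ?i j k * df ?i - Rv ?i j ?i * df k)) = 0"
    using S by simp
  have P1: "(\<Sum>j\<in>UNIV. \<Sum>k\<in>UNIV. G j k * gg j k) = 4" by (rule tr1[OF GL ggs])
  have P2: "(\<Sum>j\<in>UNIV. \<Sum>k\<in>UNIV. G j k * df j * gg ?i k) = df ?i" by (rule tr2[OF GR Gs])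
  have P3: "(\<Sum>j\<in>UNIV. \<Sum>k\<in>UNIV. G j k * df k * gg ?i j) = df ?i"
  proof -
    have "(\<Sum>j\<in>UNIV. \<Sum>k\<in>UNIV. G j k * df k * gg ?i j) = (\<Sum>j\<in>UNIV. \<Sum>k\<in>UNIV. G j k * df j * gg ?i k)"
      unfolding UNIV_4 by (simp add: algebra_simps Gs)
    then show ?thesis using P2 by simp
  qed
  have P4: "(\<Sum>j\<in>UNIV. \<Sum>k\<in>UNIV. G j k * df j * df k) = 0"
  proof -
    have "(\<Sum>j\<in>UNIV. \<Sum>k\<in>UNIV. G j k * df j * df k) = (\<Sum>k\<in>UNIV. df k * v k)"
      unfolding v UNIV_4 by (simp add: algebra_simps Gs)
    then show ?thesis using N by simp
  qed
  have "(\<Sum>j\<in>UNIV. \<Sum>k\<in>UNIV. G j k * (Rv ?i j k * df ?i - Rv ?i j ?i * df k))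
     = -(lam/3) * (df ?i * df ?i * (\<Sum>j\<in>UNIV. \<Sum>k\<in>UNIV. G j k * gg j k)
         - df ?i * (\<Sum>j\<in>UNIV. \<Sum>k\<in>UNIV. G j k * df j * gg ?i k)
         - df ?i * (\<Sum>j\<in>UNIV. \<Sum>k\<in>UNIV. G j k * df k * gg ?i j)
         + gg ?i ?i * (\<Sum>j\<in>UNIV. \<Sum>k\<in>UNIV. G j k * df j * df k))"
    unfolding Rv UNIV_4 by (simp add: algebra_simps ggs)
  also have "\<dots> = -(lam/3) * (2 * (df ?i * df ?i))" unfolding P1 P2 P3 P4 by simp
  finally have "lam * (df ?i * df ?i) = 0" using z by simp
  then show ?thesis using nz by simp
qed

lemma alg_cotton:
  fixes gg G Rc H :: t2 and df v dtau dlam :: t1 and Rv C :: t3 and lam mu tau :: real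
  assumes GL: "\<And>i k. (\<Sum>j\<in>UNIV. G i j * gg j k) = (if i = k then 1 else 0)"
    and GR: "\<And>i k. (\<Sum>j\<in>UNIV. gg i j * G j k) = (if i = k then 1 else 0)"
    and Gs: "\<And>a b. G a b = G b a" and ggs: "\<And>a b. gg a b = gg b a"
    and v: "\<And>k. v k = (\<Sum>j\<in>UNIV. G k j * df j)"
    and N: "(\<Sum>k\<in>UNIV. df k * v k) = 0"
    and qE: "\<And>i j. H i j = lam * gg i j - Rc i j + mu * df i * df j"
    and Rcs: "\<And>a b. Rc a b = Rc b a"
    and RcV: "\<And>i. (\<Sum>a\<in>UNIV. Rc i a * v a) = lam * df i"
    and tau: "tau = (\<Sum>j\<in>UNIV. \<Sum>k\<in>UNIV. G j k * Rc j k)"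
    and W: "\<And>i j k. Rv i j k + tau/6 * (gg i k * df j - df i * gg j k)
              + 1/2 * (lam * df i * gg j k - Rc i k * df j + Rc j k * df i - lam * df j * gg i k) = 0"
    and dv: "\<And>i j k. -1/2 * C i j k + 1/12 * (dtau i * gg j k - dtau j * gg i k) = 0"
    and cot: "\<And>i j k. C i j k = dlam i * gg j k - dlam j * gg i k - Rv i j k + mu * (df j * H i k - df i * H j k)"
    and mu: "mu \<noteq> -1/2"
    and nz: "df i0 \<noteq> 0"
  shows "tau = 4 * lam \<and> (\<exists>\<phi>. \<forall>j k. Rc j k = lam * gg j k + \<phi> * df j * df k)
     \<and> (\<forall>i j k. Rv i j k = -(lam/3) * (df i * gg j k - df j * gg i k))"
proof -
  define u where "u i = dtau i / 6 - dlam i" for i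
  define \<alpha> where "\<alpha> = -tau/6 + lam/2 - mu*lam"
  define \<beta> where "\<beta> = 1/2 + mu"
  have \<beta>: "\<beta> \<noteq> 0" using mu by (simp add: \<beta>_def)
  have E1: "u i * gg j k - u j * gg i k = \<alpha> * (df i * gg j k - df j * gg i k) + \<beta> * (df i * Rc j k - df j * Rc i k)" for i j k
  proof -
    have Rv: "Rv i j k = - (tau/6 * (gg i k * df j - df i * gg j k)
              + 1/2 * (lam * df i * gg j k - Rc i k * df j + Rc j k * df i - lam * df j * gg i k))"
      using W[of i j k] by linarith
    have "-1/2 * (dlam i * gg j k - dlam j * gg i k - Rv i j k + mu * (df j * H i k - df i * H j k))
          + 1/12 * (dtau i * gg j k - dtau j * gg i k) = 0" using dv[of i j k] cot[of i j k] by simp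
    then have "-1/2 * (dlam i * gg j k - dlam j * gg i k + (tau/6 * (gg i k * df j - df i * gg j k)
              + 1/2 * (lam * df i * gg j k - Rc i k * df j + Rc j k * df i - lam * df j * gg i k))
              + mu * (df j * (lam * gg i k - Rc i k + mu * df i * df k) - df i * (lam * gg j k - Rc j k + mu * df j * df k)))
          + 1/12 * (dtau i * gg j k - dtau j * gg i k) = 0" unfolding Rv qE by simp
    then show ?thesis unfolding u_def \<alpha>_def \<beta>_def by (simp add: algebra_simps; linarith)
  qed
  have lower: "(\<Sum>l\<in>UNIV. gg p l * v l) = df p" for p
    unfolding v by (rule alg_lower[OF GR])
  have E2: "3 * u i = 3 * \<alpha> * df i + \<beta> * (tau - lam) * df i" for i
  proof -
    have "(\<Sum>j\<in>UNIV. \<Sum>k\<in>UNIV. G j k * (u i * gg j k - u j * gg i k))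
        = (\<Sum>j\<in>UNIV. \<Sum>k\<in>UNIV. G j k * (\<alpha> * (df i * gg j k - df j * gg i k) + \<beta> * (df i * Rc j k - df j * Rc i k)))"
      using E1 by simp
    moreover have "(\<Sum>j\<in>UNIV. \<Sum>k\<in>UNIV. G j k * (u i * gg j k - u j * gg i k))
        = u i * (\<Sum>j\<in>UNIV. \<Sum>k\<in>UNIV. G j k * gg j k) - (\<Sum>j\<in>UNIV. \<Sum>k\<in>UNIV. G j k * u j * gg i k)"
      unfolding UNIV_4 by (simp add: algebra_simps)
    moreover have "(\<Sum>j\<in>UNIV. \<Sum>k\<in>UNIV. G j k * (\<alpha> * (df i * gg j k - df j * gg i k) + \<beta> * (df i * Rc j k - df j * Rc i k)))
        = \<alpha> * (df i * (\<Sum>j\<in>UNIV. \<Sum>k\<in>UNIV. G j k * gg j k) - (\<Sum>j\<in>UNIV. \<Sum>k\<in>UNIV. G j k * df j * gg i k))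
          + \<beta> * (df i * (\<Sum>j\<in>UNIV. \<Sum>k\<in>UNIV. G j k * Rc j k) - (\<Sum>k\<in>UNIV. Rc i k * v k))"
      unfolding v UNIV_4 by (simp add: algebra_simps Gs)
    ultimately have "u i * 4 - u i = \<alpha> * (df i * 4 - df i) + \<beta> * (df i * tau - lam * df i)"
      unfolding tr1[OF GL ggs] tr2[OF GR Gs] RcV tau[symmetric] by simp
    then show ?thesis by (simp add: algebra_simps)
  qed
  define \<kappa> where "\<kappa> = (tau - lam) / 3"
  have E3: "df i * Rc j k - df j * Rc i k = \<kappa> * (df i * gg j k - df j * gg i k)" for i j k
  proof -
    have ui: "u a = (\<alpha> + \<beta> * (tau - lam) / 3) * df a" for a using E2[of a] by (simp add: field_simps; linarith)
    define A where "A = df i * gg j k - df j * gg i k"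
    define B where "B = df i * Rc j k - df j * Rc i k"
    have "u i * gg j k - u j * gg i k = (\<alpha> + \<beta> * \<kappa>) * A"
      unfolding ui \<kappa>_def A_def by (simp add: algebra_simps)
    then have "\<alpha> * A + \<beta> * B = \<alpha> * A + \<beta> * \<kappa> * A"
      using E1[of i j k] unfolding A_def[symmetric] B_def[symmetric] by (simp add: algebra_simps)
    then have "\<beta> * B = \<beta> * (\<kappa> * A)" by simp
    then have "\<beta> * (df i * Rc j k - df j * Rc i k) = \<beta> * (\<kappa> * (df i * gg j k - df j * gg i k))"
      unfolding A_def B_def .
    then show ?thesis using \<beta> by simp
  qed
  define s where "s k = (Rc i0 k - \<kappa> * gg i0 k) / df i0" for k
  have E4: "Rc j k = \<kappa> * gg j k + df j * s k" for j k
    using E3[of i0 j k] nz unfolding s_def by (simp add: field_simps)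
  have E5: "\<kappa> = lam"
  proof -
    have "(\<Sum>a\<in>UNIV. Rc a i0 * v a) = \<kappa> * (\<Sum>a\<in>UNIV. gg i0 a * v a) + s i0 * (\<Sum>a\<in>UNIV. df a * v a)"
      unfolding E4 UNIV_4 by (simp add: algebra_simps ggs)
    moreover have "(\<Sum>a\<in>UNIV. Rc a i0 * v a) = lam * df i0" using RcV[of i0] by (simp add: Rcs)
    ultimately have "lam * df i0 = \<kappa> * df i0" using lower N by simp
    then show ?thesis using nz by simp
  qed
  have tau4: "tau = 4 * lam" using E5 unfolding \<kappa>_def by simp
  define \<phi> where "\<phi> = s i0 / df i0"
  have E7: "Rc j k = lam * gg j k + \<phi> * df j * df k" for j k
  proof -
    have "df i0 * s k = df k * s i0" using E4[of i0 k] E4[of k i0] Rcs[of i0 k] ggs[of i0 k] by simp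
    then have "s k = \<phi> * df k" using nz unfolding \<phi>_def by (simp add: field_simps)
    then show ?thesis using E4[of j k] E5 by simp
  qed
  have E8: "Rv i j k = -(lam/3) * (df i * gg j k - df j * gg i k)" for i j k
  proof -
    have "Rv i j k = - (tau/6 * (gg i k * df j - df i * gg j k)
              + 1/2 * (lam * df i * gg j k - Rc i k * df j + Rc j k * df i - lam * df j * gg i k))"
      using W[of i j k] by linarith
    then show ?thesis unfolding E7 tau4 by (simp add: algebra_simps)
  qed
  show ?thesis using tau4 E7 E8 by blast
qed

lemma alg_recurrent:
  fixes G H ddf :: t2 and Gm dG :: t3 and df :: t1
  assumes dG: "\<And>k j. dG i k j = - (\<Sum>a\<in>UNIV. G k a * Gm j i a + Gm k i a * G a j)"
    and ddf: "\<And>a m. ddf a m = H a m + (\<Sum>p\<in>UNIV. Gm p a m * df p)"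
    and H: "\<And>a b. H a b = psi * df a * df b"
  shows "(\<Sum>j\<in>UNIV. dG i k j * df j + G k j * ddf i j) + (\<Sum>m\<in>UNIV. Gm k i m * (\<Sum>j\<in>UNIV. G m j * df j))
       = (psi * df i) * (\<Sum>j\<in>UNIV. G k j * df j)"
  unfolding dG ddf H UNIV_4 by (simp add: algebra_simps)

lemma alg_S:
  fixes nH Rv :: t3 and df :: t1
  assumes Ric: "\<And>i j k. Rv i j k = nH i j k - nH j i k"
    and R3: "\<And>i j k l. nH i j k * df l = nH i l k * df j"
    and sym: "\<And>i j k. nH i j k = nH i k j"
  shows "Rv i j k * df l = Rv i j l * df k"
proof -
  have "Rv i j k * df l = nH i l k * df j - nH j l k * df i"
    unfolding Ric using R3[of i j k l] R3[of j i k l] by (simp add: algebra_simps)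
  moreover have "Rv i j l * df k = nH i k l * df j - nH j k l * df i"
    unfolding Ric using R3[of i j l k] R3[of j i l k] by (simp add: algebra_simps)
  ultimately show ?thesis using sym[of i k l] sym[of j k l] by simp
qed

context lmet begin

lemma sd: "smooth_on U h \<Longrightarrow> y \<in> U \<Longrightarrow> h differentiable (at y)"
  by (rule smooth_diff_at[OF U_open])

lemma chr_fun: "chr g k i j = (\<lambda>x. 1/2 * (\<Sum>l\<in>UNIV. ginv g x k l *
      (pd i (\<lambda>y. g y j l) x + pd j (\<lambda>y. g y i l) x - pd l (\<lambda>y. g y i j) x)))"
  by (rule ext) (simp add: chr_def)

lemma chr_smooth: "smooth_on U (chr g k i j)"
  unfolding chr_fun
  by (intro smooth_mult[OF U_open] smooth_const smooth_sum[OF U_open] finite_class.finite_UNIV ginv_smooth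
        smooth_add[OF U_open] smooth_diff[OF U_open] smooth_pd g_smooth)

lemma dg_sym: "y \<in> U \<Longrightarrow> pd k (\<lambda>y. g y i j) y = pd k (\<lambda>y. g y j i) y"
  by (rule pd_cong[OF U_open]) (auto simp: g_sym)

lemma chr_sym: assumes y: "y \<in> U" shows "chr g k i j y = chr g k j i y"
proof -
  have e: "\<And>l. pd l (\<lambda>y. g y i j) y = pd l (\<lambda>y. g y j i) y" using dg_sym[OF y] .
  show ?thesis unfolding chr_def e by (simp add: add.commute)
qed

lemma chr_lower: assumes y: "y \<in> U"
  shows "(\<Sum>m\<in>UNIV. chr g m k i y * g y m j)
     = 1/2 * (pd k (\<lambda>y. g y i j) y + pd i (\<lambda>y. g y k j) y - pd j (\<lambda>y. g y k i) y)"
  unfolding chr_def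
  by (rule alg_chr_lower[where G="ginv g y" and gg="g y", OF ginv_l[OF y] ginv_sym[OF y]])

lemma MC: assumes y: "y \<in> U"
  shows "pd k (\<lambda>y. g y i j) y = (\<Sum>m\<in>UNIV. chr g m k i y * g y m j + chr g m k j y * g y i m)"
proof -
  have "(\<Sum>m\<in>UNIV. chr g m k j y * g y i m) = (\<Sum>m\<in>UNIV. chr g m k j y * g y m i)"
    using g_sym[OF y] by simp
  also have "\<dots> = 1/2 * (pd k (\<lambda>y. g y j i) y + pd j (\<lambda>y. g y k i) y - pd i (\<lambda>y. g y k j) y)"
    by (rule chr_lower[OF y])
  finally have s2: "(\<Sum>m\<in>UNIV. chr g m k j y * g y i m) = \<dots>" .
  show ?thesis unfolding sum.distrib chr_lower[OF y] s2 dg_sym[OF y, of k j i] by (simp add: field_simps)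
qed

lemma dG: assumes y: "y \<in> U"
  shows "pd i (\<lambda>y. ginv g y d c) y = - (\<Sum>a\<in>UNIV. ginv g y d a * chr g c i a y + chr g d i a y * ginv g y a c)"
proof (rule alg_dG[where gg="g y" and G="ginv g y" and Gm="\<lambda>m i a. chr g m i a y"
      and dg="\<lambda>i a b. pd i (\<lambda>z. g z a b) y" and dG="\<lambda>i b c. pd i (\<lambda>z. ginv g z b c) y"])
  show "\<And>i k. (\<Sum>j\<in>UNIV. ginv g y i j * g y j k) = (if i = k then 1 else 0)" using ginv_l[OF y] .
  show "\<And>i k. (\<Sum>j\<in>UNIV. g y i j * ginv g y j k) = (if i = k then 1 else 0)" using ginv_r[OF y] .
  show "\<And>a b. pd i (\<lambda>z. g z a b) y = (\<Sum>m\<in>UNIV. chr g m i a y * g y m b + chr g m i b y * g y a m)"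
    using MC[OF y] .
  fix a c
  have "pd i (\<lambda>z. \<Sum>b\<in>UNIV. g z a b * ginv g z b c) y = pd i (\<lambda>z. if a = c then 1 else 0) y"
    by (rule pd_cong[OF U_open y]) (simp add: ginv_r)
  also have "\<dots> = 0" by (rule pd_const)
  finally have z: "pd i (\<lambda>z. \<Sum>b\<in>UNIV. g z a b * ginv g z b c) y = 0" .
  have "pd i (\<lambda>z. \<Sum>b\<in>UNIV. g z a b * ginv g z b c) y = (\<Sum>b\<in>UNIV. pd i (\<lambda>z. g z a b * ginv g z b c) y)"
    by (rule pd_sum) (auto intro!: sd[OF _ y] smooth_mult[OF U_open] g_smooth ginv_smooth)
  also have "\<dots> = (\<Sum>b\<in>UNIV. pd i (\<lambda>z. g z a b) y * ginv g y b c + g y a b * pd i (\<lambda>z. ginv g z b c) y)"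
    by (rule sum.cong[OF refl], rule pd_mult) (auto intro!: sd[OF _ y] g_smooth ginv_smooth)
  finally show "(\<Sum>b\<in>UNIV. pd i (\<lambda>z. g z a b) y * ginv g y b c + g y a b * pd i (\<lambda>z. ginv g z b c) y) = 0"
    using z by simp
qed

end

locale qe = lmet +
  fixes f :: "real^4 \<Rightarrow> real" and mu :: real and lam :: "real^4 \<Rightarrow> real"
  assumes f_sm: "smooth_on U f" and lam_sm: "smooth_on U lam"
    and qE: "\<forall>x\<in>U. \<forall>i j. hes g f i j x + ric g i j x - mu * pd i f x * pd j f x = lam x * g x i j"
    and iso: "\<forall>x\<in>U. grad g f x \<noteq> 0 \<and> bil g x (grad g f x) (grad g f x) = 0"
    and mu: "mu \<noteq> - 1/2"
    and dW: "\<forall>x\<in>U. \<forall>i j k. divW g i j k x = 0"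
    and Wf: "\<forall>x\<in>U. \<forall>i j k. (\<Sum>l\<in>UNIV. weyl g i j k l x * grad g f x $ l) = 0"
begin

lemma df_sm: "smooth_on U (pd i f)" by (rule smooth_pd[OF f_sm])
lemma ddf_sm: "smooth_on U (pd i (pd j f))" by (rule smooth_pd[OF df_sm])

lemma hes_fun: "hes g f i j = (\<lambda>x. pd i (pd j f) x - (\<Sum>k\<in>UNIV. chr g k i j x * pd k f x))"
  by (rule ext) (simp add: hes_def)

lemma hes_sm: "smooth_on U (hes g f i j)"
  unfolding hes_fun
  by (intro smooth_diff[OF U_open] ddf_sm smooth_sum[OF U_open] finite_class.finite_UNIV smooth_mult[OF U_open] chr_smooth df_sm)

lemma hes_sym: assumes x: "x \<in> U" shows "hes g f i j x = hes g f j i x"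
  unfolding hes_def using pd_swap[OF U_open f_sm x, of i j] chr_sym[OF x] by simp

lemma ddf_eq: "pd a (pd m f) x = hes g f a m x + (\<Sum>p\<in>UNIV. chr g p a m x * pd p f x)"
  by (simp add: hes_def)

lemma ric_eq: "x \<in> U \<Longrightarrow> ric g i j x = lam x * g x i j - hes g f i j x + mu * pd i f x * pd j f x"
  using qE by (auto simp: algebra_simps)

lemma ric_sym: "x \<in> U \<Longrightarrow> ric g i j x = ric g j i x"
  using ric_eq hes_sym g_sym by simp

lemma grad_c: "grad g f x $ k = (\<Sum>j\<in>UNIV. ginv g x k j * pd j f x)"
  by (simp add: grad_def)

lemma lower: "x \<in> U \<Longrightarrow> (\<Sum>l\<in>UNIV. g x p l * grad g f x $ l) = pd p f x"
  unfolding grad_c by (rule alg_lower[OF ginv_r])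

lemma Nz: assumes x: "x \<in> U" shows "(\<Sum>k\<in>UNIV. pd k f x * grad g f x $ k) = 0"
proof -
  have "bil g x (grad g f x) (grad g f x) = 0" using iso x by blast
  then show ?thesis unfolding bil_def using alg_bil[of "g x" "\<lambda>l. grad g f x $ l" "\<lambda>p. pd p f x"] lower[OF x] by simp
qed

lemma Nfun: assumes x: "x \<in> U" shows "(\<Sum>a\<in>UNIV. \<Sum>b\<in>UNIV. ginv g x a b * pd a f x * pd b f x) = 0"
proof -
  have "(\<Sum>a\<in>UNIV. \<Sum>b\<in>UNIV. ginv g x a b * pd a f x * pd b f x) = (\<Sum>k\<in>UNIV. pd k f x * grad g f x $ k)"
    unfolding grad_c UNIV_4 by (simp add: algebra_simps)
  then show ?thesis using Nz[OF x] by simp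
qed

lemma HV: assumes x: "x \<in> U" shows "(\<Sum>a\<in>UNIV. hes g f i a x * grad g f x $ a) = 0"
proof -
  have "pd i (\<lambda>y. \<Sum>a\<in>UNIV. \<Sum>b\<in>UNIV. ginv g y a b * pd a f y * pd b f y) x = pd i (\<lambda>y. 0) x"
    by (rule pd_cong[OF U_open x]) (simp add: Nfun)
  then have z: "pd i (\<lambda>y. \<Sum>a\<in>UNIV. \<Sum>b\<in>UNIV. ginv g y a b * pd a f y * pd b f y) x = 0" by (simp add: pd_const)
  have "pd i (\<lambda>y. \<Sum>a\<in>UNIV. \<Sum>b\<in>UNIV. ginv g y a b * pd a f y * pd b f y) x
      = (\<Sum>a\<in>UNIV. pd i (\<lambda>y. \<Sum>b\<in>UNIV. ginv g y a b * pd a f y * pd b f y) x)"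
    by (rule pd_sum) (auto intro!: sd[OF _ x] smooth_sum[OF U_open] smooth_mult[OF U_open] ginv_smooth df_sm)
  also have "\<dots> = (\<Sum>a\<in>UNIV. \<Sum>b\<in>UNIV. pd i (\<lambda>y. ginv g y a b * pd a f y * pd b f y) x)"
    by (rule sum.cong[OF refl], rule pd_sum) (auto intro!: sd[OF _ x] smooth_mult[OF U_open] ginv_smooth df_sm)
  also have "\<dots> = (\<Sum>a\<in>UNIV. \<Sum>b\<in>UNIV. pd i (\<lambda>y. ginv g y a b) x * pd a f x * pd b f x
        + ginv g x a b * pd i (pd a f) x * pd b f x + ginv g x a b * pd a f x * pd i (pd b f) x)"
  proof (intro sum.cong refl)
    fix a b
    have d1: "(\<lambda>y. ginv g y a b) differentiable (at x)" by (intro sd[OF _ x] ginv_smooth)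
    have d2: "pd a f differentiable (at x)" "pd b f differentiable (at x)" by (intro sd[OF _ x] df_sm)+
    have d3: "(\<lambda>y. ginv g y a b * pd a f y) differentiable (at x)"
      by (intro sd[OF _ x] smooth_mult[OF U_open] ginv_smooth df_sm)
    show "pd i (\<lambda>y. ginv g y a b * pd a f y * pd b f y) x = pd i (\<lambda>y. ginv g y a b) x * pd a f x * pd b f x
        + ginv g x a b * pd i (pd a f) x * pd b f x + ginv g x a b * pd a f x * pd i (pd b f) x"
      using pd_mult[OF d3 d2(2), of i] pd_mult[OF d1 d2(1), of i] by (simp add: algebra_simps)
  qed
  finally have D: "(\<Sum>a\<in>UNIV. \<Sum>b\<in>UNIV. pd i (\<lambda>y. ginv g y a b) x * pd a f x * pd b f x
        + ginv g x a b * pd i (pd a f) x * pd b f x + ginv g x a b * pd a f x * pd i (pd b f) x) = 0"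
    using z by simp
  have "(\<Sum>a\<in>UNIV. hes g f i a x * (\<Sum>b\<in>UNIV. ginv g x a b * pd b f x)) = 0"
    by (rule alg_HV[where i=i and G="ginv g x" and dG="\<lambda>i a b. pd i (\<lambda>y. ginv g y a b) x"
        and Gm="\<lambda>m i a. chr g m i a x" and ddf="\<lambda>a b. pd a (pd b f) x" and H="\<lambda>a b. hes g f a b x"
        and df="\<lambda>a. pd a f x", OF ginv_sym[OF x] dG[OF x] ddf_eq D])
  then show ?thesis unfolding grad_c .
qed

end

context qe begin

lemma RcV: assumes x: "x \<in> U" shows "(\<Sum>a\<in>UNIV. ric g i a x * grad g f x $ a) = lam x * pd i f x"
  by (rule alg_RcV[where gg="g x" and H="\<lambda>a b. hes g f a b x" and mu=mu and lam="lam x",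
        OF lower[OF x] Nz[OF x] HV[OF x] ric_eq[OF x]])

lemma dH: assumes x: "x \<in> U"
  shows "pd a (hes g f j k) x = pd a (pd j (pd k f)) x
     - (\<Sum>m\<in>UNIV. pd a (chr g m j k) x * pd m f x + chr g m j k x * pd a (pd m f) x)"
proof -
  have "pd a (hes g f j k) x = pd a (\<lambda>x. pd j (pd k f) x - (\<Sum>m\<in>UNIV. chr g m j k x * pd m f x)) x"
    by (simp add: hes_fun)
  also have "\<dots> = pd a (pd j (pd k f)) x - pd a (\<lambda>x. \<Sum>m\<in>UNIV. chr g m j k x * pd m f x) x"
    by (rule pd_diff) (auto intro!: sd[OF _ x] ddf_sm smooth_sum[OF U_open] smooth_mult[OF U_open] chr_smooth df_sm)
  also have "pd a (\<lambda>x. \<Sum>m\<in>UNIV. chr g m j k x * pd m f x) x = (\<Sum>m\<in>UNIV. pd a (\<lambda>x. chr g m j k x * pd m f x) x)"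
    by (rule pd_sum) (auto intro!: sd[OF _ x] smooth_mult[OF U_open] chr_smooth df_sm)
  also have "\<dots> = (\<Sum>m\<in>UNIV. pd a (chr g m j k) x * pd m f x + chr g m j k x * pd a (pd m f) x)"
    by (rule sum.cong[OF refl], rule pd_mult) (auto intro!: sd[OF _ x] chr_smooth df_sm)
  finally show ?thesis .
qed

lemma Rv_eq: assumes x: "x \<in> U"
  shows "(\<Sum>l\<in>UNIV. riem g i j k l x * grad g f x $ l) = - (\<Sum>p\<in>UNIV. rstd g p k i j x * pd p f x)"
proof -
  have "(\<Sum>l\<in>UNIV. riem g i j k l x * grad g f x $ l)
      = - (\<Sum>p\<in>UNIV. rstd g p k i j x * (\<Sum>l\<in>UNIV. g x p l * grad g f x $ l))"
    unfolding riem_def UNIV_4 by (simp add: algebra_simps)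
  then show ?thesis using lower[OF x] by simp
qed

definition nH where
  "nH x i j k = pd i (hes g f j k) x - (\<Sum>m\<in>UNIV. chr g m i j x * hes g f m k x + chr g m i k x * hes g f j m x)"

lemma ricci: assumes x: "x \<in> U"
  shows "nH x i j k - nH x j i k = (\<Sum>l\<in>UNIV. riem g i j k l x * grad g f x $ l)"
  unfolding nH_def Rv_eq[OF x] rstd_def
  by (rule alg_ricci[where dH="\<lambda>a j k. pd a (hes g f j k) x" and dddf="\<lambda>a j k. pd a (pd j (pd k f)) x"
      and dGm="\<lambda>a m j k. pd a (chr g m j k) x" and Gm="\<lambda>m j k. chr g m j k x" and ddf="\<lambda>a m. pd a (pd m f) x"
      and df="\<lambda>m. pd m f x" and H="\<lambda>a b. hes g f a b x",
      OF dH[OF x] ddf_eq pd_swap[OF U_open df_sm x] chr_sym[OF x]])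

lemma covric_eq: assumes x: "x \<in> U"
  shows "covric g i j k x = pd i lam x * g x j k - nH x i j k + mu * (hes g f i j x * pd k f x + pd j f x * hes g f i k x)"
proof -
  have dRc: "pd i (ric g j k) x = pd i lam x * g x j k + lam x * pd i (\<lambda>y. g y j k) x - pd i (hes g f j k) x
      + mu * (pd i (pd j f) x * pd k f x + pd j f x * pd i (pd k f) x)" for j k
  proof -
    have "pd i (ric g j k) x = pd i (\<lambda>y. lam y * g y j k - hes g f j k y + mu * pd j f y * pd k f y) x"
      by (rule pd_cong[OF U_open x]) (simp add: ric_eq)
    also have "\<dots> = pd i (\<lambda>y. lam y * g y j k - hes g f j k y) x + pd i (\<lambda>y. mu * (pd j f y * pd k f y)) x"
      by (simp only: mult.assoc, rule pd_add)
         (auto intro!: sd[OF _ x] smooth_mult[OF U_open] smooth_diff[OF U_open] lam_sm g_smooth hes_sm smooth_const df_sm)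
    also have "pd i (\<lambda>y. lam y * g y j k - hes g f j k y) x = pd i (\<lambda>y. lam y * g y j k) x - pd i (hes g f j k) x"
      by (rule pd_diff) (auto intro!: sd[OF _ x] smooth_mult[OF U_open] lam_sm g_smooth hes_sm)
    also have "pd i (\<lambda>y. lam y * g y j k) x = pd i lam x * g x j k + lam x * pd i (\<lambda>y. g y j k) x"
      by (rule pd_mult) (auto intro!: sd[OF _ x] lam_sm g_smooth)
    also have "pd i (\<lambda>y. mu * (pd j f y * pd k f y)) x = mu * pd i (\<lambda>y. pd j f y * pd k f y) x"
      by (rule pd_cmult) (auto intro!: sd[OF _ x] smooth_mult[OF U_open] df_sm)
    also have "pd i (\<lambda>y. pd j f y * pd k f y) x = pd i (pd j f) x * pd k f x + pd j f x * pd i (pd k f) x"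
      by (rule pd_mult) (auto intro!: sd[OF _ x] df_sm)
    finally show ?thesis by simp
  qed
  show ?thesis
    unfolding covric_def nH_def
    by (rule alg_covric[where dRc="\<lambda>j k. pd i (ric g j k) x" and dg="\<lambda>i j k. pd i (\<lambda>y. g y j k) x"
        and dH="\<lambda>a j k. pd a (hes g f j k) x" and ddf="\<lambda>a m. pd a (pd m f) x" and Gm="\<lambda>m j k. chr g m j k x"
        and df="\<lambda>m. pd m f x" and H="\<lambda>a b. hes g f a b x" and dlam="\<lambda>i. pd i lam x" and lam="lam x" and mu=mu
        and gg="g x" and Rc="\<lambda>a b. ric g a b x",
        OF dRc MC[OF x] ddf_eq ric_eq[OF x]])
qed

lemma cot: assumes x: "x \<in> U"
  shows "covric g i j k x - covric g j i k x = pd i lam x * g x j k - pd j lam x * g x i k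
     - (\<Sum>l\<in>UNIV. riem g i j k l x * grad g f x $ l) + mu * (pd j f x * hes g f i k x - pd i f x * hes g f j k x)"
  unfolding covric_eq[OF x] ricci[OF x, symmetric] using hes_sym[OF x, of i j] by (simp add: algebra_simps)

lemma Weq: assumes x: "x \<in> U"
  shows "(\<Sum>l\<in>UNIV. riem g i j k l x * grad g f x $ l) + scal g x / 6 * (g x i k * pd j f x - pd i f x * g x j k)
     + 1/2 * (lam x * pd i f x * g x j k - ric g i k x * pd j f x + ric g j k x * pd i f x - lam x * pd j f x * g x i k) = 0"
proof -
  have "(\<Sum>l\<in>UNIV. weyl g i j k l x * grad g f x $ l)
     = (\<Sum>l\<in>UNIV. riem g i j k l x * grad g f x $ l)
       + scal g x / 6 * (g x i k * (\<Sum>l\<in>UNIV. g x j l * grad g f x $ l) - (\<Sum>l\<in>UNIV. g x i l * grad g f x $ l) * g x j k)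
       + 1/2 * ((\<Sum>l\<in>UNIV. ric g i l x * grad g f x $ l) * g x j k - ric g i k x * (\<Sum>l\<in>UNIV. g x j l * grad g f x $ l)
          + ric g j k x * (\<Sum>l\<in>UNIV. g x i l * grad g f x $ l) - (\<Sum>l\<in>UNIV. ric g j l x * grad g f x $ l) * g x i k)"
    unfolding weyl_def UNIV_4 by (simp add: algebra_simps)
  also have "\<dots> = (\<Sum>l\<in>UNIV. riem g i j k l x * grad g f x $ l) + scal g x / 6 * (g x i k * pd j f x - pd i f x * g x j k)
     + 1/2 * (lam x * pd i f x * g x j k - ric g i k x * pd j f x + ric g j k x * pd i f x - lam x * pd j f x * g x i k)"
    unfolding lower[OF x] RcV[OF x] by (simp add: algebra_simps)
  finally show ?thesis using Wf x by simp
qed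

lemma df_nz: assumes x: "x \<in> U" shows "\<exists>i0. pd i0 f x \<noteq> 0"
proof (rule ccontr)
  assume "\<not> (\<exists>i0. pd i0 f x \<noteq> 0)"
  then have "grad g f x = 0" by (simp add: grad_def vec_eq_iff)
  then show False using iso x by blast
qed

lemma pointwise: assumes x: "x \<in> U"
  shows "scal g x = 4 * lam x \<and> (\<exists>\<phi>. \<forall>j k. ric g j k x = lam x * g x j k + \<phi> * pd j f x * pd k f x)
     \<and> (\<forall>i j k. (\<Sum>l\<in>UNIV. riem g i j k l x * grad g f x $ l) = -(lam x/3) * (pd i f x * g x j k - pd j f x * g x i k))"
proof -
  obtain i0 where nz: "pd i0 f x \<noteq> 0" using df_nz[OF x] by blast
  have qE': "\<And>i j. hes g f i j x = lam x * g x i j - ric g i j x + mu * pd i f x * pd j f x"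
    using ric_eq[OF x] by simp
  have dv: "\<And>i j k. -1/2 * (covric g i j k x - covric g j i k x) + 1/12 * (pd i (scal g) x * g x j k - pd j (scal g) x * g x i k) = 0"
    using dW x unfolding divW_def by simp
  show ?thesis
    by (rule alg_cotton[where gg="g x" and G="ginv g x" and Rc="\<lambda>a b. ric g a b x" and H="\<lambda>a b. hes g f a b x"
        and df="\<lambda>a. pd a f x" and v="\<lambda>a. grad g f x $ a" and dtau="\<lambda>i. pd i (scal g) x" and dlam="\<lambda>i. pd i lam x"
        and Rv="\<lambda>i j k. \<Sum>l\<in>UNIV. riem g i j k l x * grad g f x $ l" and C="\<lambda>i j k. covric g i j k x - covric g j i k x"
        and lam="lam x" and mu=mu and tau="scal g x",
        OF ginv_l[OF x] ginv_r[OF x] ginv_sym[OF x] g_sym[OF x] grad_c Nz[OF x] qE' ric_sym[OF x] RcV[OF x]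
          _ Weq[OF x] dv cot[OF x] mu nz])
       (simp add: scal_def)
qed

end

context qe begin

lemma rank1: assumes y: "y \<in> U" shows "\<exists>\<psi>. \<forall>a b. hes g f a b y = \<psi> * pd a f y * pd b f y"
proof -
  obtain \<phi> where \<phi>: "\<And>j k. ric g j k y = lam y * g y j k + \<phi> * pd j f y * pd k f y"
    using pointwise[OF y] by blast
  have "hes g f a b y = (mu - \<phi>) * pd a f y * pd b f y" for a b
    using ric_eq[OF y, of a b] \<phi>[of a b] by (simp add: algebra_simps)
  then show ?thesis by blast
qed

lemma rank1_sym: assumes y: "y \<in> U" shows "hes g f j k y * pd l f y = hes g f l k y * pd j f y"
proof -
  obtain \<psi> where "\<And>a b. hes g f a b y = \<psi> * pd a f y * pd b f y" using rank1[OF y] by blast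
  then show ?thesis by simp
qed

lemma R3: assumes x: "x \<in> U" shows "nH x i j k * pd l f x = nH x i l k * pd j f x"
proof -
  have "pd i (\<lambda>y. hes g f j k y * pd l f y) x = pd i (\<lambda>y. hes g f l k y * pd j f y) x"
    by (rule pd_cong[OF U_open x]) (simp add: rank1_sym)
  moreover have "pd i (\<lambda>y. hes g f j k y * pd l f y) x = pd i (hes g f j k) x * pd l f x + hes g f j k x * pd i (pd l f) x"
    by (rule pd_mult) (auto intro!: sd[OF _ x] hes_sm df_sm)
  moreover have "pd i (\<lambda>y. hes g f l k y * pd j f y) x = pd i (hes g f l k) x * pd j f x + hes g f l k x * pd i (pd j f) x"
    by (rule pd_mult) (auto intro!: sd[OF _ x] hes_sm df_sm)
  ultimately have D: "pd i (hes g f j k) x * pd l f x + hes g f j k x * pd i (pd l f) x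
      = pd i (hes g f l k) x * pd j f x + hes g f l k x * pd i (pd j f) x" by simp
  obtain \<psi> where H: "\<And>a b. hes g f a b x = \<psi> * pd a f x * pd b f x" using rank1[OF x] by blast
  show ?thesis unfolding nH_def
    by (rule alg_R3[where dH="\<lambda>a j k. pd a (hes g f j k) x" and H="\<lambda>a b. hes g f a b x"
        and ddf="\<lambda>a m. pd a (pd m f) x" and df="\<lambda>m. pd m f x" and Gm="\<lambda>m j k. chr g m j k x",
        OF D H ddf_eq])
qed

lemma nH_sym: assumes x: "x \<in> U" shows "nH x i j k = nH x i k j"
proof -
  have "pd i (hes g f j k) x = pd i (hes g f k j) x"
    by (rule pd_cong[OF U_open x]) (simp add: hes_sym)
  then show ?thesis unfolding nH_def using hes_sym[OF x] by (simp add: add.commute)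
qed

lemma lam0: assumes x: "x \<in> U" shows "lam x = 0"
proof -
  obtain i0 where nz: "pd i0 f x \<noteq> 0" using df_nz[OF x] by blast
  have S: "\<And>i j k l. (\<Sum>m\<in>UNIV. riem g i j k m x * grad g f x $ m) * pd l f x
      = (\<Sum>m\<in>UNIV. riem g i j l m x * grad g f x $ m) * pd k f x"
    by (rule alg_S[where nH="nH x" and df="\<lambda>m. pd m f x", OF ricci[OF x, symmetric] R3[OF x] nH_sym[OF x]])
  show ?thesis
    by (rule alg_lam0[where gg="g x" and G="ginv g x" and df="\<lambda>a. pd a f x" and v="\<lambda>a. grad g f x $ a"
        and Rv="\<lambda>i j k. \<Sum>l\<in>UNIV. riem g i j k l x * grad g f x $ l",
        OF ginv_l[OF x] ginv_r[OF x] ginv_sym[OF x] g_sym[OF x] grad_c Nz[OF x] _ S nz])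
       (use pointwise[OF x] in blast)
qed

lemma grad_sm: "smooth_on U (\<lambda>x. grad g f x $ k)"
  unfolding grad_c
  by (intro smooth_sum[OF U_open] finite_class.finite_UNIV smooth_mult[OF U_open] ginv_smooth df_sm)

lemma pure_rad: "pure_radiation_parallel U g"
proof -
  define \<phi> where "\<phi> x = (SOME \<phi>. \<forall>j k. ric g j k x = lam x * g x j k + \<phi> * pd j f x * pd k f x)" for x
  have \<phi>: "\<And>j k. ric g j k x = lam x * g x j k + \<phi> x * pd j f x * pd k f x" if x: "x \<in> U" for x
  proof -
    have "\<exists>\<phi>. \<forall>j k. ric g j k x = lam x * g x j k + \<phi> * pd j f x * pd k f x" using pointwise[OF x] by blast
    then show "\<And>j k. ric g j k x = lam x * g x j k + \<phi> x * pd j f x * pd k f x"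
      unfolding \<phi>_def by (rule someI_ex[where P="\<lambda>\<phi>. \<forall>j k. ric g j k x = lam x * g x j k + \<phi> * pd j f x * pd k f x", THEN spec, THEN spec])
  qed
  have H: "\<And>a b. hes g f a b x = (mu - \<phi> x) * pd a f x * pd b f x" if x: "x \<in> U" for x
    using ric_eq[OF x] \<phi>[OF x] by (simp add: algebra_simps)
  have main: "\<forall>x\<in>U. grad g f x \<noteq> 0 \<and> bil g x (grad g f x) (grad g f x) = 0 \<and>
      (\<forall>i k. pd i (\<lambda>y. grad g f y $ k) x + (\<Sum>m\<in>UNIV. chr g k i m x * grad g f x $ m)
         = (\<lambda>i x. (mu - \<phi> x) * pd i f x) i x * grad g f x $ k) \<and>
      (\<forall>i j. ric g i j x = \<phi> x * (\<Sum>a\<in>UNIV. g x i a * grad g f x $ a) * (\<Sum>b\<in>UNIV. g x j b * grad g f x $ b))"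
  proof (intro ballI conjI allI)
    fix x assume x: "x \<in> U"
    show "grad g f x \<noteq> 0" "bil g x (grad g f x) (grad g f x) = 0" using iso x by auto
    fix i j
    show "ric g i j x = \<phi> x * (\<Sum>a\<in>UNIV. g x i a * grad g f x $ a) * (\<Sum>b\<in>UNIV. g x j b * grad g f x $ b)"
      unfolding lower[OF x] \<phi>[OF x] lam0[OF x] by simp
  next
    fix x i k assume x: "x \<in> U"
    have "pd i (\<lambda>y. \<Sum>j\<in>UNIV. ginv g y k j * pd j f y) x = (\<Sum>j\<in>UNIV. pd i (\<lambda>y. ginv g y k j * pd j f y) x)"
      by (rule pd_sum) (auto intro!: sd[OF _ x] smooth_mult[OF U_open] ginv_smooth df_sm)
    also have "\<dots> = (\<Sum>j\<in>UNIV. pd i (\<lambda>y. ginv g y k j) x * pd j f x + ginv g x k j * pd i (pd j f) x)"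
      by (rule sum.cong[OF refl], rule pd_mult) (auto intro!: sd[OF _ x] ginv_smooth df_sm)
    finally have e: "pd i (\<lambda>y. \<Sum>j\<in>UNIV. ginv g y k j * pd j f y) x = \<dots>" .
    have "pd i (\<lambda>y. grad g f y $ k) x + (\<Sum>m\<in>UNIV. chr g k i m x * grad g f x $ m)
         = ((mu - \<phi> x) * pd i f x) * grad g f x $ k"
      unfolding grad_c e
      by (rule alg_recurrent[where dG="\<lambda>i k j. pd i (\<lambda>y. ginv g y k j) x" and G="ginv g x"
          and Gm="\<lambda>m j k. chr g m j k x" and ddf="\<lambda>a m. pd a (pd m f) x" and H="\<lambda>a b. hes g f a b x"
          and df="\<lambda>m. pd m f x", OF dG[OF x] ddf_eq H[OF x]])
    then show "pd i (\<lambda>y. grad g f y $ k) x + (\<Sum>m\<in>UNIV. chr g k i m x * grad g f x $ m)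
         = (\<lambda>i x. (mu - \<phi> x) * pd i f x) i x * grad g f x $ k" by simp
  qed
  show ?thesis
    unfolding pure_radiation_parallel_def
  proof (intro ballI)
    fix p assume p: "p \<in> U"
    show "\<exists>N. open N \<and> p \<in> N \<and> N \<subseteq> U \<and>
     (\<exists>(V :: real^4 \<Rightarrow> real^4) (\<phi> :: real^4 \<Rightarrow> real) (\<alpha> :: 4 \<Rightarrow> real^4 \<Rightarrow> real).
        (\<forall>k. smooth_on N (\<lambda>x. V x $ k)) \<and>
        (\<forall>x\<in>N. V x \<noteq> 0 \<and> bil g x (V x) (V x) = 0 \<and>
           (\<forall>i k. pd i (\<lambda>y. V y $ k) x + (\<Sum>m\<in>UNIV. chr g k i m x * V x $ m) = \<alpha> i x * V x $ k) \<and>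
           (\<forall>i j. ric g i j x = \<phi> x * (\<Sum>a\<in>UNIV. g x i a * V x $ a) * (\<Sum>b\<in>UNIV. g x j b * V x $ b))))"
      apply (rule exI[of _ U])
      apply (intro conjI U_open p subset_refl)
      apply (rule exI[of _ "grad g f"], rule exI[of _ \<phi>], rule exI[of _ "\<lambda>i x. (mu - \<phi> x) * pd i f x"])
      using grad_sm main by blast
  qed
qed

end

theorem lemma2p7:
  fixes U :: "(real^4) set" and g :: metric and f :: "real^4 \<Rightarrow> real"
    and \<mu> :: real and lam :: "real^4 \<Rightarrow> real"
  assumes "open U"
    and "lorentz_metric U g"
    and "smooth_on U f"
    and "smooth_on U lam"
    and "\<forall>x\<in>U. \<forall>i j. hes g f i j x + ric g i j x - \<mu> * pd i f x * pd j f x = lam x * g x i j"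
    and "\<forall>x\<in>U. grad g f x \<noteq> 0 \<and> bil g x (grad g f x) (grad g f x) = 0"
    and "\<mu> \<noteq> - 1/2"
    and "\<forall>x\<in>U. \<forall>i j k. divW g i j k x = 0"
    and "\<forall>x\<in>U. \<forall>i j k. (\<Sum>l\<in>UNIV. weyl g i j k l x * grad g f x $ l) = 0"
  shows "(\<forall>x\<in>U. lam x = 0) \<and> pure_radiation_parallel U g"
proof -
  interpret qe U g f \<mu> lam
    by (unfold_locales) (use assms in auto)
  show ?thesis using lam0 pure_rad by blast
qed

end
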